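(* Let $n>p\ge1$, $X\in\mathbb{R}^{n\times p}$ with rows $x_1^T,\dots,x_n^T$, $Y=(y_1,\dots,y_n)^T$, and $p\le h<n$. Assume (A1) $x_i\ne\pm x_j$ for $i\neq j$ and $x_i\neq0$ for all $i$; (A2) $r^2_{(h)}(\beta)>0$ for all $\beta\in\mathbb{R}^p$; (A3) for every $(\circ_1,\dots,\circ_{n-1})\in\{+,-\}^{n-1}$ the $(n-1)\times p$ matrix with rows $(x_1\circ_kx_{k+1})^T$, $k=1,\dots,n-1$, has rank $p$. If $U$ is a connected component of $\mathcal{U}$ with $\partial U\neq\emptyset$, then there exist $\beta\in\partial U$, pairwise distinct indices $i_1,\dots,i_{p+1}\in\{1,\dots,n\}$ and signs $\circ_1,\dots,\circ_p\in\{+,-\}$ such that the $p$ equations $(x_{i_k}\circ_kx_{i_{k+1}})^T\beta=y_{i_k}\circ_ky_{i_{k+1}}$, $k=1,\dots,p$, are linearly independent, $\beta$ is their unique solution, and $r^2_{i_1}(\beta)=r^2_{(h)}(\beta)=r^2_{(h+1)}(\beta)$.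
   Context: $r_i(\beta)=y_i-x_i^T\beta$; $r^2_{(1)}(\beta)\le\dots\le r^2_{(n)}(\beta)$ are the sorted squared residuals. For vectors/numbers $a,b$ and $\circ\in\{+,-\}$, $a\circ b$ is $a+b$ or $a-b$. $Q^{(n,h)}=\{w\in\{0,1\}^n:\sum_iw^i=h\}$; $(\beta,w)\in Z$ means $\sum_{i=1}^hr^2_{(i)}(\beta)=\sum_{i=1}^nw^ir_i^2(\beta)$; $\mathcal{U}$ is the set of $\beta\in\mathbb{R}^p$ for which exactly one $w\in Q^{(n,h)}$ satisfies $(\beta,w)\in Z$ (equivalently $r^2_{(h)}(\beta)<r^2_{(h+1)}(\beta)$). *)

theory Defs
  imports "HOL-Analysis.Analysis"
begin

text \<open>Data: n observations, rows x i (i < n, 0-based) in real^'p, responses y i.\<close>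

definition resid :: "(nat \<Rightarrow> real^'p) \<Rightarrow> (nat \<Rightarrow> real) \<Rightarrow> nat \<Rightarrow> real^'p \<Rightarrow> real" where
  "resid x y i \<beta> = y i - x i \<bullet> \<beta>"

text \<open>k-th smallest squared residual (1-based k, 1 <= k <= n).\<close>
definition sorted_sq :: "nat \<Rightarrow> (nat \<Rightarrow> real^'p) \<Rightarrow> (nat \<Rightarrow> real) \<Rightarrow> nat \<Rightarrow> real^'p \<Rightarrow> real" where
  "sorted_sq n x y k \<beta> = sort (map (\<lambda>i. (resid x y i \<beta>)\<^sup>2) [0..<n]) ! (k - 1)"

definition Qset :: "nat \<Rightarrow> nat \<Rightarrow> (nat \<Rightarrow> nat) set" where
  "Qset n h = {w \<in> {0..<n} \<rightarrow>\<^sub>E {0,1}. (\<Sum>i<n. w i) = h}"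

definition inZ :: "nat \<Rightarrow> nat \<Rightarrow> (nat \<Rightarrow> real^'p) \<Rightarrow> (nat \<Rightarrow> real) \<Rightarrow> real^'p \<Rightarrow> (nat \<Rightarrow> nat) \<Rightarrow> bool" where
  "inZ n h x y \<beta> w \<longleftrightarrow>
     (\<Sum>k=1..h. sorted_sq n x y k \<beta>) = (\<Sum>i<n. real (w i) * (resid x y i \<beta>)\<^sup>2)"

definition Uset :: "nat \<Rightarrow> nat \<Rightarrow> (nat \<Rightarrow> real^'p) \<Rightarrow> (nat \<Rightarrow> real) \<Rightarrow> (real^'p) set" where
  "Uset n h x y = {\<beta>. \<exists>!w. w \<in> Qset n h \<and> inZ n h x y \<beta> w}"

end

theory Submission
  imports Defs "HOL-Combinatorics.List_Permutation"
begin


definition ssq :: "nat \<Rightarrow> (nat \<Rightarrow> real) \<Rightarrow> nat \<Rightarrow> real" where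
  "ssq n g k = sort (map g [0..<n]) ! (k-1)"

lemma sorted_sq_ssq: "sorted_sq n x y k \<beta> = ssq n (\<lambda>i. (resid x y i \<beta>)\<^sup>2) k"
  by (simp add: sorted_sq_def ssq_def)

lemma sort_bij:
  obtains \<pi> where "bij_betw \<pi> {..<n} {..<n}" "\<And>k. k<n \<Longrightarrow> sort (map g [0..<n]) ! k = g (\<pi> k)"
proof -
  have m: "mset (sort (map g [0..<n])) = mset (map g [0..<n])" by simp
  from permutation_Ex_bij[OF m] obtain f where
    f: "bij_betw f {..<length (sort (map g [0..<n]))} {..<length (map g [0..<n])}"
      "\<forall>i<length (sort (map g [0..<n])). sort (map g [0..<n]) ! i = map g [0..<n] ! f i" by blast
  have fb: "bij_betw f {..<n} {..<n}" using f(1) by simp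
  show ?thesis
  proof (rule that[OF fb])
    fix k assume k: "k < n"
    have "f k < n" using fb k by (auto dest: bij_betwE)
    then show "sort (map g [0..<n]) ! k = g (f k)" using f(2) k by simp
  qed
qed

lemma sort_mono: "i \<le> j \<Longrightarrow> j < n \<Longrightarrow> sort (map g [0..<n]) ! i \<le> sort (map g [0..<n]) ! j"
  by (rule sorted_nth_mono) auto

lemma card_transfer:
  assumes "bij_betw \<pi> {..<n} {..<n}"
  shows "card {i. i<n \<and> P i} = card {k. k<n \<and> P (\<pi> k)}"
proof -
  have "{i. i<n \<and> P i} = \<pi> ` {k. k<n \<and> P (\<pi> k)}"
    using assms by (auto simp: bij_betw_def)
  moreover have "inj_on \<pi> {k. k<n \<and> P (\<pi> k)}"
    using assms by (auto simp: bij_betw_def intro: inj_on_subset)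
  ultimately show ?thesis by (simp add: card_image)
qed

lemma ssq_level:
  assumes k1: "1 \<le> k" and kn: "k \<le> n"
    and lt: "card {i. i<n \<and> g i < c} < k" and le: "k \<le> card {i. i<n \<and> g i \<le> c}"
  shows "ssq n g k = c"
proof -
  obtain \<pi> where pb: "bij_betw \<pi> {..<n} {..<n}" and ps: "\<And>k. k<n \<Longrightarrow> sort (map g [0..<n]) ! k = g (\<pi> k)"
  proof -
    from sort_bij[of n g] show ?thesis using that by auto
  qed
  define a where "a = (\<lambda>k. g (\<pi> k))"
  have mono: "\<And>i j. i \<le> j \<Longrightarrow> j < n \<Longrightarrow> a i \<le> a j"
  proof -
    fix i j :: nat assume ij: "i \<le> j" "j < n"
    have "sort (map g [0..<n]) ! i \<le> sort (map g [0..<n]) ! j" using sort_mono[OF ij] .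
    then show "a i \<le> a j" unfolding a_def using ps ij by simp
  qed
  have lt': "card {j. j<n \<and> a j < c} < k" using lt card_transfer[OF pb, of "\<lambda>i. g i < c"] unfolding a_def by simp
  have le': "k \<le> card {j. j<n \<and> a j \<le> c}" using le card_transfer[OF pb, of "\<lambda>i. g i \<le> c"] unfolding a_def by simp
  have v: "ssq n g k = a (k-1)" using ps kn k1 unfolding ssq_def a_def by simp
  have "\<not> a (k-1) < c"
  proof
    assume "a (k-1) < c"
    then have "{..<k} \<subseteq> {j. j<n \<and> a j < c}"
    proof (intro subsetI CollectI conjI)
      fix j assume "j \<in> {..<k}"
      then have j: "j \<le> k - 1" by simp
      show "j < n" using j kn k1 by simp
      have "k - 1 < n" using kn k1 by simp
      then have "a j \<le> a (k-1)" using mono[OF j] by simp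
      then show "a j < c" using \<open>a (k-1) < c\<close> by simp
    qed
    then have "card {..<k} \<le> card {j. j<n \<and> a j < c}" by (intro card_mono) auto
    then show False using lt' by simp
  qed
  moreover have "\<not> a (k-1) > c"
  proof
    assume "a (k-1) > c"
    then have "{j. j<n \<and> a j \<le> c} \<subseteq> {..<k-1}"
    proof (intro subsetI)
      fix j assume "j \<in> {j. j<n \<and> a j \<le> c}"
      then have j: "j < n" "a j \<le> c" by auto
      show "j \<in> {..<k-1}"
      proof (rule ccontr)
        assume "j \<notin> {..<k-1}"
        then have "k - 1 \<le> j" by simp
        then have "a (k-1) \<le> a j" using mono j by simp
        then show False using j \<open>a (k-1) > c\<close> by simp
      qed
    qed
    then have "card {j. j<n \<and> a j \<le> c} \<le> card {..<k-1}" by (intro card_mono) auto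
    then show False using le' k1 by simp
  qed
  ultimately show ?thesis using v by simp
qed


definition sep :: "nat \<Rightarrow> nat \<Rightarrow> (nat \<Rightarrow> real) \<Rightarrow> nat set \<Rightarrow> bool" where
  "sep n h g H \<longleftrightarrow> H \<subseteq> {..<n} \<and> card H = h \<and> (\<forall>i\<in>H. \<forall>j. j<n \<longrightarrow> j \<notin> H \<longrightarrow> g i < g j)"

definition tie :: "nat \<Rightarrow> nat \<Rightarrow> (nat \<Rightarrow> real) \<Rightarrow> real \<Rightarrow> bool" where
  "tie n h g c \<longleftrightarrow> card {i. i<n \<and> g i < c} < h \<and> h < card {i. i<n \<and> g i \<le> c}"

lemma sep_not_tie:
  assumes "sep n h g H" "tie n h g c" shows False
proof -
  have H: "H \<subseteq> {..<n}" "card H = h" "\<And>i j. i\<in>H \<Longrightarrow> j<n \<Longrightarrow> j \<notin> H \<Longrightarrow> g i < g j"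
    using assms(1) unfolding sep_def by auto
  have t: "card {i. i<n \<and> g i < c} < h" "h < card {i. i<n \<and> g i \<le> c}" using assms(2) unfolding tie_def by auto
  have "\<not> H \<subseteq> {i. i<n \<and> g i < c}"
  proof
    assume "H \<subseteq> {i. i<n \<and> g i < c}"
    then have "card H \<le> card {i. i<n \<and> g i < c}" by (intro card_mono) auto
    then show False using t H by simp
  qed
  then obtain i where i: "i \<in> H" "c \<le> g i" using H(1) by force
  have "\<not> {i. i<n \<and> g i \<le> c} \<subseteq> H"
  proof
    assume "{i. i<n \<and> g i \<le> c} \<subseteq> H"
    then have "card {i. i<n \<and> g i \<le> c} \<le> card H" using H(1) finite_subset by (intro card_mono) auto
    then show False using t H by simp
  qed
  then obtain j where j: "j < n" "j \<notin> H" "g j \<le> c" by force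
  show False using H(3)[OF i(1) j(1,2)] i j by simp
qed


lemma ssq_tie:
  assumes "tie n h g c" "1 \<le> h" "h < n"
  shows "ssq n g h = c" "ssq n g (Suc h) = c"
proof -
  have t: "card {i. i<n \<and> g i < c} < h" "h < card {i. i<n \<and> g i \<le> c}" using assms(1) unfolding tie_def by auto
  show "ssq n g h = c" by (rule ssq_level) (use t assms(2,3) in auto)
  show "ssq n g (Suc h) = c" by (rule ssq_level) (use t assms(2,3) in auto)
qed

lemma exch:
  fixes a :: "nat \<Rightarrow> real"
  assumes mono: "\<And>i j. i \<le> j \<Longrightarrow> j < n \<Longrightarrow> a i \<le> a j"
    and K: "K \<subseteq> {..<n}" "card K = h" and h: "1 \<le> h" "h < n"
  shows "sum a {..<h} \<le> sum a K" "a (h-1) < a h \<Longrightarrow> K \<noteq> {..<h} \<Longrightarrow> sum a {..<h} < sum a K"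
proof -
  define A where "A = K - {..<h}"
  define B where "B = {..<h} - K"
  have fK: "finite K" using K(1) finite_subset by blast
  have s1: "sum a K = sum a (K \<inter> {..<h}) + sum a A" unfolding A_def
    using sum.Int_Diff[OF fK, of a "{..<h}"] by blast
  have s2: "sum a {..<h} = sum a (K \<inter> {..<h}) + sum a B" unfolding B_def
    using sum.Int_Diff[of "{..<h}" a K] by (simp add: Int_commute)
  have c1: "card K = card (K \<inter> {..<h}) + card A" unfolding A_def using fK
    using card_Int_Diff[OF fK, of "{..<h}"] by blast
  have c2: "h = card (K \<inter> {..<h}) + card B" unfolding B_def
    using card_Int_Diff[of "{..<h}" K] by (simp add: Int_commute)
  have cAB: "card A = card B" using c1 c2 K(2) by simp
  have hA: "\<And>i. i \<in> A \<Longrightarrow> a h \<le> a i"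
  proof -
    fix i assume "i \<in> A"
    then have "h \<le> i" "i < n" unfolding A_def using K(1) by auto
    then show "a h \<le> a i" using mono by simp
  qed
  have hB: "\<And>i. i \<in> B \<Longrightarrow> a i \<le> a (h-1)"
  proof -
    fix i assume "i \<in> B"
    then have "i \<le> h - 1" "h - 1 < n" unfolding B_def using h by auto
    then show "a i \<le> a (h-1)" using mono by simp
  qed
  have mh: "a (h-1) \<le> a h" using mono h by simp
  have sA: "real (card A) * a h \<le> sum a A" using sum_bounded_below[of A "a h" a] hA by simp
  have sB: "sum a B \<le> real (card B) * a (h-1)" using sum_bounded_above[of B a "a (h-1)"] hB by simp
  have m1: "real (card B) * a (h-1) \<le> real (card A) * a h" using cAB mh by (simp add: mult_left_mono)
  show "sum a {..<h} \<le> sum a K" using s1 s2 sA sB m1 by linarith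
  assume lt: "a (h-1) < a h" and ne: "K \<noteq> {..<h}"
  have "A \<noteq> {}"
  proof
    assume "A = {}"
    then have "K \<subseteq> {..<h}" unfolding A_def by auto
    moreover have "card K = card {..<h}" using K(2) by simp
    ultimately have "K = {..<h}" by (intro card_subset_eq) auto
    then show False using ne by simp
  qed
  then have "card A > 0" unfolding A_def using fK by auto
  then have m2: "real (card B) * a (h-1) < real (card A) * a h" using cAB lt by simp
  show "sum a {..<h} < sum a K" using s1 s2 sA sB m2 by linarith
qed


lemma pi_data:
  obtains \<pi> where "bij_betw \<pi> {..<n} {..<n}"
    "\<And>k. k<n \<Longrightarrow> sort (map g [0..<n]) ! k = g (\<pi> k)"
    "\<And>i j. i \<le> j \<Longrightarrow> j < n \<Longrightarrow> g (\<pi> i) \<le> g (\<pi> j)"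
proof -
  obtain \<pi> where pb: "bij_betw \<pi> {..<n} {..<n}" and ps: "\<And>k. k<n \<Longrightarrow> sort (map g [0..<n]) ! k = g (\<pi> k)"
  proof -
    from sort_bij[of n g] show ?thesis using that by auto
  qed
  have mono: "\<And>i j. i \<le> j \<Longrightarrow> j < n \<Longrightarrow> g (\<pi> i) \<le> g (\<pi> j)"
  proof -
    fix i j :: nat assume ij: "i \<le> j" "j < n"
    have "sort (map g [0..<n]) ! i \<le> sort (map g [0..<n]) ! j" using sort_mono[OF ij] .
    then show "g (\<pi> i) \<le> g (\<pi> j)" using ps ij by simp
  qed
  show ?thesis using that pb ps mono by blast
qed

lemma pi_sep:
  assumes pb: "bij_betw \<pi> {..<n} {..<n}"
    and monoA: "\<forall>i j. i \<le> j \<longrightarrow> j < n \<longrightarrow> g (\<pi> i) \<le> g (\<pi> j)"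
    and h: "1 \<le> h" "h < n" and lt: "g (\<pi> (h-1)) < g (\<pi> h)"
  shows "sep n h g (\<pi> ` {..<h})"
proof -
  have mono: "\<And>i j. i \<le> j \<Longrightarrow> j < n \<Longrightarrow> g (\<pi> i) \<le> g (\<pi> j)" using monoA by blast
  define H0 where "H0 = \<pi> ` {..<h}"
  have inj: "inj_on \<pi> {..<n}" using pb by (simp add: bij_betw_def)
  have "sep n h g H0" unfolding sep_def
  proof (intro conjI ballI allI impI)
    show "H0 \<subseteq> {..<n}" unfolding H0_def using pb h by (auto dest: bij_betwE)
    show "card H0 = h" unfolding H0_def using inj h
      by (subst card_image) (auto intro: inj_on_subset)
    fix i j assume i: "i \<in> H0" and j: "j < n" "j \<notin> H0"
    obtain k where k: "k < h" "i = \<pi> k" using i unfolding H0_def by auto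
    obtain l where l: "l < n" "j = \<pi> l" using j pb unfolding bij_betw_def by (metis imageE lessThan_iff)
    have "\<not> l < h" using l j unfolding H0_def by auto
    then have "g (\<pi> h) \<le> g (\<pi> l)" using mono l by simp
    moreover have "g (\<pi> k) \<le> g (\<pi> (h-1))" using mono k h by simp
    ultimately show "g i < g j" using lt k l by simp
  qed
  then show ?thesis unfolding H0_def .
qed

lemma pi_tie:
  assumes pb: "bij_betw \<pi> {..<n} {..<n}"
    and monoA: "\<forall>i j. i \<le> j \<longrightarrow> j < n \<longrightarrow> g (\<pi> i) \<le> g (\<pi> j)"
    and h: "1 \<le> h" "h < n" and nlt: "\<not> g (\<pi> (h-1)) < g (\<pi> h)"
  shows "tie n h g (g (\<pi> (h-1)))"
proof -
  have mono: "\<And>i j. i \<le> j \<Longrightarrow> j < n \<Longrightarrow> g (\<pi> i) \<le> g (\<pi> j)" using monoA by blast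
  define a where "a = (\<lambda>k. g (\<pi> k))"
  define c where "c = a (h-1)"
  have mono': "\<And>i j. i \<le> j \<Longrightarrow> j < n \<Longrightarrow> a i \<le> a j" using mono unfolding a_def by simp
  have eq: "a h = c" using nlt mono'[of "h-1" h] h unfolding c_def a_def by simp
  have "{j. j<n \<and> a j < c} \<subseteq> {..<h-1}"
  proof
    fix j assume "j \<in> {j. j<n \<and> a j < c}"
    then have j: "j < n" "a j < c" by auto
    show "j \<in> {..<h-1}"
    proof (rule ccontr)
      assume "j \<notin> {..<h-1}"
      then have "h - 1 \<le> j" by simp
      then show False using mono'[of "h-1" j] j unfolding c_def by simp
    qed
  qed
  then have "card {j. j<n \<and> a j < c} \<le> h - 1" using card_mono[of "{..<h-1}"] by fastforce
  then have t1: "card {i. i<n \<and> g i < c} < h" using card_transfer[OF pb, of "\<lambda>i. g i < c"] h unfolding a_def by simp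
  have "{..h} \<subseteq> {j. j<n \<and> a j \<le> c}"
  proof
    fix j assume "j \<in> {..h}"
    then have "j \<le> h" by simp
    then show "j \<in> {j. j<n \<and> a j \<le> c}" using mono'[of j h] h eq by simp
  qed
  then have "card {..h} \<le> card {j. j<n \<and> a j \<le> c}" by (intro card_mono) auto
  then have t2: "h < card {i. i<n \<and> g i \<le> c}" using card_transfer[OF pb, of "\<lambda>i. g i \<le> c"] unfolding a_def by simp
  show ?thesis unfolding tie_def using t1 t2 c_def a_def by simp
qed

lemma key_pi:
  assumes h: "1 \<le> h" "h < n"
  shows "(\<exists>H. sep n h g H) \<or> tie n h g (ssq n g h)"
proof -
  obtain \<pi> where pb: "bij_betw \<pi> {..<n} {..<n}"
    and ps: "\<And>k. k<n \<Longrightarrow> sort (map g [0..<n]) ! k = g (\<pi> k)"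
    and mono: "\<And>i j. i \<le> j \<Longrightarrow> j < n \<Longrightarrow> g (\<pi> i) \<le> g (\<pi> j)"
  proof -
    from pi_data[of n g] show ?thesis using that by blast
  qed
  have v: "ssq n g h = g (\<pi> (h-1))" using ps h unfolding ssq_def by simp
  show ?thesis
  proof -
    have m: "\<forall>i j. i \<le> j \<longrightarrow> j < n \<longrightarrow> g (\<pi> i) \<le> g (\<pi> j)" using mono by blast
    show ?thesis using pi_sep[OF pb m h] pi_tie[OF pb m h] v by (cases "g (\<pi> (h-1)) < g (\<pi> h)") auto
  qed
qed


definition ind :: "nat \<Rightarrow> nat set \<Rightarrow> nat \<Rightarrow> nat" where
  "ind n H = (\<lambda>i. if i < n then (if i \<in> H then 1 else 0) else undefined)"

lemma Qset_D:
  assumes w: "w \<in> Qset n h"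
  shows "(\<Sum>i<n. real (w i) * g i) = sum g {i. i<n \<and> w i = 1}" "card {i. i<n \<and> w i = 1} = h"
proof -
  have w01: "\<And>i. i<n \<Longrightarrow> w i = 0 \<or> w i = 1" using w unfolding Qset_def by (auto simp: PiE_iff)
  have hs: "(\<Sum>i<n. w i) = h" using w unfolding Qset_def by auto
  have st: "{i. i<n \<and> w i = 1} = {i\<in>{..<n}. w i = 1}" by auto
  have "(\<Sum>i<n. real (w i) * g i) = (\<Sum>i<n. if w i = 1 then g i else 0)"
    by (rule sum.cong) (use w01 in auto)
  also have "\<dots> = sum g {i\<in>{..<n}. w i = 1}" by (rule sum.inter_filter[symmetric]) simp
  finally show "(\<Sum>i<n. real (w i) * g i) = sum g {i. i<n \<and> w i = 1}" using st by simp
  have "card {i\<in>{..<n}. w i = 1} = (\<Sum>i\<in>{i\<in>{..<n}. w i = 1}. 1::nat)" by simp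
  also have "\<dots> = (\<Sum>i<n. if w i = 1 then 1 else 0)" by (rule sum.inter_filter) simp
  also have "\<dots> = (\<Sum>i<n. w i)" by (rule sum.cong) (use w01 in auto)
  finally show "card {i. i<n \<and> w i = 1} = h" using st hs by simp
qed

lemma ind_Q:
  assumes "H \<subseteq> {..<n}" "card H = h"
  shows "ind n H \<in> Qset n h" "{i. i<n \<and> ind n H i = 1} = H"
proof -
  have st: "{i\<in>{..<n}. i \<in> H} = H" using assms by auto
  have "(\<Sum>i<n. ind n H i) = (\<Sum>i<n. if i \<in> H then 1 else 0)" unfolding ind_def by simp
  also have "\<dots> = (\<Sum>i\<in>{i\<in>{..<n}. i \<in> H}. 1::nat)" by (rule sum.inter_filter[symmetric]) simp
  also have "\<dots> = h" using st assms by simp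
  finally have s: "(\<Sum>i<n. ind n H i) = h" .
  show "ind n H \<in> Qset n h" unfolding Qset_def using s by (auto simp: ind_def PiE_iff extensional_def)
  show "{i. i<n \<and> ind n H i = 1} = H" using assms by (auto simp: ind_def)
qed

lemma Q_eq:
  assumes "w \<in> Qset n h" "w' \<in> Qset n h" "{i. i<n \<and> w i = 1} = {i. i<n \<and> w' i = 1}"
  shows "w = w'"
proof
  have P1: "w \<in> {0..<n} \<rightarrow>\<^sub>E {0,1}" using assms(1) unfolding Qset_def by blast
  have P2: "w' \<in> {0..<n} \<rightarrow>\<^sub>E {0,1}" using assms(2) unfolding Qset_def by blast
  fix i show "w i = w' i"
  proof (cases "i < n")
    case True
    have "w i \<in> {0,1}" by (rule PiE_mem[OF P1]) (use True in simp)
    moreover have "w' i \<in> {0,1}" by (rule PiE_mem[OF P2]) (use True in simp)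
    moreover have "i \<in> {i. i<n \<and> w i = 1} \<longleftrightarrow> i \<in> {i. i<n \<and> w' i = 1}" using assms(3) by simp
    then have "w i = 1 \<longleftrightarrow> w' i = 1" using True by simp
    ultimately show ?thesis by auto
  next
    case False
    have "w i = undefined" by (rule extensional_arb[of w "{0..<n}"]) (use False P1 P2 in \<open>auto simp: PiE_iff\<close>)
    moreover have "w' i = undefined" by (rule extensional_arb[of w' "{0..<n}"]) (use False P1 P2 in \<open>auto simp: PiE_iff\<close>)
    ultimately show ?thesis by simp
  qed
qed

lemma unique_iff:
  assumes h: "1 \<le> h" "h < n"
  shows "(\<exists>!w. w \<in> Qset n h \<and> (\<Sum>k=1..h. ssq n g k) = (\<Sum>i<n. real (w i) * g i)) \<longleftrightarrow> (\<exists>H. sep n h g H)"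
proof -
  obtain \<pi> where pb: "bij_betw \<pi> {..<n} {..<n}"
    and ps: "\<And>k. k<n \<Longrightarrow> sort (map g [0..<n]) ! k = g (\<pi> k)"
    and mono: "\<And>i j. i \<le> j \<Longrightarrow> j < n \<Longrightarrow> g (\<pi> i) \<le> g (\<pi> j)"
  proof -
    from pi_data[of n g] show ?thesis using that by blast
  qed
  have m: "\<forall>i j. i \<le> j \<longrightarrow> j < n \<longrightarrow> g (\<pi> i) \<le> g (\<pi> j)" using mono by blast
  have inj: "inj_on \<pi> {..<n}" using pb by (simp add: bij_betw_def)
  define H0 where "H0 = \<pi> ` {..<h}"
  have ij0: "inj_on \<pi> {..<h}" using inj h by (auto intro: inj_on_subset)
  define S where "S = (\<Sum>k=1..h. ssq n g k)"
  have "S = (\<Sum>k<h. ssq n g (Suc k))" unfolding S_def using sum.atLeast1_atMost_eq[of "ssq n g" h] by simp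
  also have "\<dots> = (\<Sum>k<h. g (\<pi> k))" by (rule sum.cong) (use ps h in \<open>auto simp: ssq_def\<close>)
  also have "\<dots> = sum g H0" unfolding H0_def using sum.reindex[OF ij0, of g] by simp
  finally have SH0: "S = sum g H0" .
  have opt: "S \<le> sum g K \<and> (g (\<pi> (h-1)) < g (\<pi> h) \<longrightarrow> K \<noteq> H0 \<longrightarrow> S < sum g K)"
    if K: "K \<subseteq> {..<n}" "card K = h" for K
  proof -
    define K' where "K' = {k. k<n \<and> \<pi> k \<in> K}"
    have img: "\<pi> ` K' = K" unfolding K'_def using pb K(1) unfolding bij_betw_def by auto
    have ij: "inj_on \<pi> K'" unfolding K'_def using inj by (auto intro: inj_on_subset)
    have sK: "sum g K = sum (\<lambda>k. g (\<pi> k)) K'" using sum.reindex[OF ij, of g] img by simp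
    have cK: "card K' = h" using card_image[OF ij] img K(2) by simp
    have K'n: "K' \<subseteq> {..<n}" unfolding K'_def by auto
    have e: "sum (\<lambda>k. g (\<pi> k)) {..<h} = S" using SH0 sum.reindex[OF ij0, of g] unfolding H0_def by simp
    note ex = exch[of n "\<lambda>k. g (\<pi> k)", OF _ K'n cK h]
    have "S \<le> sum g K" using ex(1) mono e sK by simp
    moreover have "S < sum g K" if lt: "g (\<pi> (h-1)) < g (\<pi> h)" and ne: "K \<noteq> H0"
    proof -
      have "K' \<noteq> {..<h}" using ne img unfolding H0_def by auto
      then show ?thesis using ex(2) mono e sK lt by simp
    qed
    ultimately show ?thesis by blast
  qed
  have "(\<exists>!w. w \<in> Qset n h \<and> S = (\<Sum>i<n. real (w i) * g i)) \<longleftrightarrow> (\<exists>H. sep n h g H)"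
  proof
    assume ex1: "\<exists>!w. w \<in> Qset n h \<and> S = (\<Sum>i<n. real (w i) * g i)"
    show "\<exists>H. sep n h g H"
    proof (cases "g (\<pi> (h-1)) < g (\<pi> h)")
      case True then show "\<exists>H. sep n h g H" using pi_sep[OF pb m h] by blast
    next
      case False
      have eq: "g (\<pi> (h-1)) = g (\<pi> h)" using False mono[of "h-1" h] h by simp
      have sH0: "H0 \<subseteq> {..<n}" "card H0 = h" unfolding H0_def using pb h card_image[OF ij0]
        by (auto dest: bij_betwE)
      have a1: "\<pi> (h-1) \<in> H0" unfolding H0_def using h by auto
      have a2: "\<pi> h \<notin> H0" unfolding H0_def using h inj by (auto dest: inj_onD)
      have a3: "\<pi> h < n" using pb h by (auto dest: bij_betwE)
      define H1 where "H1 = insert (\<pi> h) (H0 - {\<pi> (h-1)})"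
      have fH0: "finite H0" unfolding H0_def by simp
      have sH1: "H1 \<subseteq> {..<n}" "card H1 = h" unfolding H1_def using sH0 a1 a2 a3 fH0 h
        by (auto simp: card_insert_disjoint)
      have "sum g H1 = g (\<pi> h) + (sum g H0 - g (\<pi> (h-1)))" unfolding H1_def using fH0 a1 a2
        by (simp add: sum_diff1)
      then have gH1: "sum g H1 = S" using eq SH0 by simp
      have ne: "H1 \<noteq> H0" unfolding H1_def using a2 by auto
      have w0: "ind n H0 \<in> Qset n h \<and> S = (\<Sum>i<n. real (ind n H0 i) * g i)"
        using ind_Q[OF sH0] Qset_D[where w="ind n H0"] SH0 by simp
      have w1: "ind n H1 \<in> Qset n h \<and> S = (\<Sum>i<n. real (ind n H1 i) * g i)"
        using ind_Q[OF sH1] Qset_D[where w="ind n H1"] gH1 by simp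
      have "ind n H0 = ind n H1" using ex1 w0 w1 by blast
      then have "H0 = H1" using ind_Q(2)[OF sH0] ind_Q(2)[OF sH1] by simp
      then show "\<exists>H. sep n h g H" using ne by simp
    qed
  next
    assume "\<exists>H. sep n h g H"
    then obtain H where sH: "sep n h g H" by blast
    have lt: "g (\<pi> (h-1)) < g (\<pi> h)"
    proof (rule ccontr)
      assume "\<not> ?thesis"
      from pi_tie[OF pb m h this] sep_not_tie[OF sH] show False by blast
    qed
    have sH0: "H0 \<subseteq> {..<n}" "card H0 = h" using pi_sep[OF pb m h lt] unfolding H0_def sep_def by auto
    have w0: "ind n H0 \<in> Qset n h \<and> S = (\<Sum>i<n. real (ind n H0 i) * g i)"
      using ind_Q[OF sH0] Qset_D[where w="ind n H0"] SH0 by simp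
    show "\<exists>!w. w \<in> Qset n h \<and> S = (\<Sum>i<n. real (w i) * g i)"
    proof (rule ex1I[of _ "ind n H0"])
      show "ind n H0 \<in> Qset n h \<and> S = (\<Sum>i<n. real (ind n H0 i) * g i)" using w0 .
      fix w assume w: "w \<in> Qset n h \<and> S = (\<Sum>i<n. real (w i) * g i)"
      define K where "K = {i. i<n \<and> w i = 1}"
      have K: "K \<subseteq> {..<n}" "card K = h" "S = sum g K" using Qset_D[where w=w] w unfolding K_def by auto
      have "K = H0" using opt[OF K(1,2)] lt K(3) by auto
      then have "{i. i<n \<and> w i = 1} = {i. i<n \<and> ind n H0 i = 1}" using ind_Q(2)[OF sH0] unfolding K_def by simp
      then show "w = ind n H0" using Q_eq[of w n h "ind n H0"] w w0 by blast
    qed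
  qed
  then show ?thesis unfolding S_def .
qed

lemma Uset_iff:
  assumes "1 \<le> h" "h < n"
  shows "\<beta> \<in> Uset n h x y \<longleftrightarrow> (\<exists>H. sep n h (\<lambda>i. (resid x y i \<beta>)\<^sup>2) H)"
proof -
  define G where "G = (\<lambda>i. (resid x y i \<beta>)\<^sup>2)"
  have e: "inZ n h x y \<beta> w \<longleftrightarrow> (\<Sum>k=1..h. ssq n G k) = (\<Sum>i<n. real (w i) * G i)" for w
    unfolding inZ_def G_def sorted_sq_ssq ..
  have "\<beta> \<in> Uset n h x y \<longleftrightarrow> (\<exists>!w. w \<in> Qset n h \<and> inZ n h x y \<beta> w)"
    unfolding Uset_def by (rule mem_Collect_eq)
  also have "\<dots> \<longleftrightarrow> (\<exists>!w. w \<in> Qset n h \<and> (\<Sum>k=1..h. ssq n G k) = (\<Sum>i<n. real (w i) * G i))"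
    using e by presburger
  also have "\<dots> \<longleftrightarrow> (\<exists>H. sep n h G H)" by (rule unique_iff[OF assms])
  finally show ?thesis unfolding G_def .
qed


lemma cont_sq_resid: "continuous_on UNIV (\<lambda>\<beta>. (resid x y i \<beta>)\<^sup>2)"
  unfolding resid_def by (intro continuous_intros)

lemma cont_resid: "continuous_on UNIV (\<lambda>\<beta>. resid x y i \<beta>)"
  unfolding resid_def by (intro continuous_intros)

lemma open_sepset:
  "open {\<beta>. \<forall>i\<in>H. \<forall>j\<in>J. (resid x y i \<beta>)\<^sup>2 < (resid x y j \<beta>)\<^sup>2}" if "finite H" "finite J"
proof -
  have "{\<beta>. \<forall>i\<in>H. \<forall>j\<in>J. (resid x y i \<beta>)\<^sup>2 < (resid x y j \<beta>)\<^sup>2}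
      = (\<Inter>i\<in>H. \<Inter>j\<in>J. {\<beta>. (resid x y i \<beta>)\<^sup>2 < (resid x y j \<beta>)\<^sup>2})" by auto
  moreover have "open \<dots>" using that
    by (intro open_INT ballI open_Collect_less cont_sq_resid) auto
  ultimately show ?thesis by simp
qed

lemma open_Uset:
  assumes "1 \<le> h" "h < n"
  shows "open (Uset n h x y)"
proof -
  have "Uset n h x y = (\<Union>H\<in>{H. H \<subseteq> {..<n} \<and> card H = h}.
          {\<beta>. \<forall>i\<in>H. \<forall>j\<in>{..<n}-H. (resid x y i \<beta>)\<^sup>2 < (resid x y j \<beta>)\<^sup>2})"
  proof (intro set_eqI iffI)
    fix \<beta> assume "\<beta> \<in> Uset n h x y"
    then obtain H where "sep n h (\<lambda>i. (resid x y i \<beta>)\<^sup>2) H" using Uset_iff[OF assms] by blast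
    then show "\<beta> \<in> (\<Union>H\<in>{H. H \<subseteq> {..<n} \<and> card H = h}.
          {\<beta>. \<forall>i\<in>H. \<forall>j\<in>{..<n}-H. (resid x y i \<beta>)\<^sup>2 < (resid x y j \<beta>)\<^sup>2})"
      unfolding sep_def by blast
  next
    fix \<beta> assume "\<beta> \<in> (\<Union>H\<in>{H. H \<subseteq> {..<n} \<and> card H = h}.
          {\<beta>. \<forall>i\<in>H. \<forall>j\<in>{..<n}-H. (resid x y i \<beta>)\<^sup>2 < (resid x y j \<beta>)\<^sup>2})"
    then have "\<exists>H. sep n h (\<lambda>i. (resid x y i \<beta>)\<^sup>2) H" unfolding sep_def by blast
    then show "\<beta> \<in> Uset n h x y" using Uset_iff[OF assms] by blast
  qed
  moreover have "open \<dots>"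
    by (intro open_UN ballI open_sepset) (auto intro: finite_subset)
  ultimately show ?thesis by simp
qed

locale geo =
  fixes n h :: nat and x :: "nat \<Rightarrow> real^'p" and y :: "nat \<Rightarrow> real" and U :: "(real^'p) set"
  assumes h1: "1 \<le> h" and hn: "h < n"
    and A2: "\<forall>\<beta>. sorted_sq n x y h \<beta> > 0"
    and A3: "dim {x k + x (k+1) | k. k < n-1} = CARD('p)"
    and U: "U \<in> components (Uset n h x y)"
begin

abbreviation r where "r i \<beta> \<equiv> resid x y i \<beta>"

lemma openU: "open U" using open_components[OF open_Uset[OF h1 hn] U] .

lemma USub: "U \<subseteq> Uset n h x y" using in_components_subset[OF U] .

lemma frontierU: "frontier U = closure U - U"
  unfolding frontier_def using interior_open[OF openU] by simp

lemma frontier_not_U: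
  assumes "\<beta> \<in> frontier U" shows "\<beta> \<notin> Uset n h x y"
proof
  assume b: "\<beta> \<in> Uset n h x y"
  have bc: "\<beta> \<in> closure U" "\<beta> \<notin> U" using assms frontierU by auto
  define C where "C = connected_component_set (Uset n h x y) \<beta>"
  have C: "C \<in> components (Uset n h x y)" unfolding C_def by (rule componentsI[OF b])
  have oC: "open C" using open_components[OF open_Uset[OF h1 hn] C] .
  have "\<beta> \<in> C" unfolding C_def using b by simp
  then have "C \<inter> closure U \<noteq> {}" using bc by auto
  then have "C \<inter> U \<noteq> {}" using open_Int_closure_eq_empty[OF oC] by simp
  then have "C = U" using components_nonoverlap[OF C U] by simp
  then show False using \<open>\<beta> \<in> C\<close> bc by simp
qed

lemma tie_point:
  assumes part: "\<And>i. i < n \<Longrightarrow> i \<in> L \<or> i \<in> T \<or> i \<in> Up"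
    and cL: "card L < h" and cLT: "h < card (L \<union> T)" and sub: "L \<union> T \<subseteq> {..<n}"
    and gL: "\<And>i. i \<in> L \<Longrightarrow> (r i \<gamma>)\<^sup>2 \<le> v"
    and gT: "\<And>i. i \<in> T \<Longrightarrow> (r i \<gamma>)\<^sup>2 = v"
    and gU: "\<And>i. i \<in> Up \<Longrightarrow> (r i \<gamma>)\<^sup>2 \<ge> v"
  shows "sorted_sq n x y h \<gamma> = v" "sorted_sq n x y (Suc h) \<gamma> = v" "\<gamma> \<notin> Uset n h x y"
proof -
  define g where "g = (\<lambda>i. (r i \<gamma>)\<^sup>2)"
  have fL: "finite L" using sub finite_subset by blast
  have "{i. i<n \<and> g i < v} \<subseteq> L"
  proof
    fix i assume "i \<in> {i. i<n \<and> g i < v}"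
    then have i: "i < n" "g i < v" by auto
    show "i \<in> L" using part[OF i(1)] gT gU i(2) unfolding g_def by force
  qed
  then have "card {i. i<n \<and> g i < v} \<le> card L" using fL by (intro card_mono) auto
  then have t1: "card {i. i<n \<and> g i < v} < h" using cL by simp
  have "L \<union> T \<subseteq> {i. i<n \<and> g i \<le> v}" using sub gL gT unfolding g_def by force
  then have "card (L \<union> T) \<le> card {i. i<n \<and> g i \<le> v}" by (intro card_mono) auto
  then have t2: "h < card {i. i<n \<and> g i \<le> v}" using cLT by simp
  have ti: "tie n h g v" unfolding tie_def using t1 t2 by simp
  show "sorted_sq n x y h \<gamma> = v" "sorted_sq n x y (Suc h) \<gamma> = v"
    unfolding sorted_sq_ssq using ssq_tie[OF ti h1 hn] unfolding g_def by auto
  show "\<gamma> \<notin> Uset n h x y"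
  proof
    assume "\<gamma> \<in> Uset n h x y"
    then obtain H where "sep n h g H" using Uset_iff[OF h1 hn] unfolding g_def by blast
    then show False using sep_not_tie ti by blast
  qed
qed

lemma frontier_tie:
  assumes "\<beta> \<in> frontier U"
  shows "card {i. i<n \<and> (r i \<beta>)\<^sup>2 < sorted_sq n x y h \<beta>} < h"
    "h < card {i. i<n \<and> (r i \<beta>)\<^sup>2 \<le> sorted_sq n x y h \<beta>}"
    "sorted_sq n x y (Suc h) \<beta> = sorted_sq n x y h \<beta>"
proof -
  define g where "g = (\<lambda>i. (r i \<beta>)\<^sup>2)"
  have "\<not> (\<exists>H. sep n h g H)" using frontier_not_U[OF assms] Uset_iff[OF h1 hn] unfolding g_def by blast
  then have ti: "tie n h g (ssq n g h)" using key_pi[OF h1 hn, of g] by blast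
  have e: "sorted_sq n x y h \<beta> = ssq n g h" unfolding sorted_sq_ssq g_def ..
  show "card {i. i<n \<and> (r i \<beta>)\<^sup>2 < sorted_sq n x y h \<beta>} < h"
    "h < card {i. i<n \<and> (r i \<beta>)\<^sup>2 \<le> sorted_sq n x y h \<beta>}"
    using ti unfolding tie_def e g_def by auto
  show "sorted_sq n x y (Suc h) \<beta> = sorted_sq n x y h \<beta>"
    using ssq_tie[OF ti h1 hn] unfolding sorted_sq_ssq g_def by simp
qed

end


lemma ivt_neg:
  fixes f :: "real \<Rightarrow> real"
  assumes cont: "continuous_on {0..1} f" and f0: "f 0 < 0" and nz: "\<forall>s\<in>{0..<1}. f s \<noteq> 0"
    and s: "s \<in> {0..1}"
  shows "f s \<le> 0"
proof (rule ccontr)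
  assume "\<not> f s \<le> 0"
  then have fs: "f s > 0" by simp
  have "continuous_on {0..s} f" by (rule continuous_on_subset[OF cont]) (use s in auto)
  then obtain t where t: "0 \<le> t" "t \<le> s" "f t = 0" using IVT'[of f 0 0 s] f0 fs s by auto
  have "t \<noteq> 1" using t fs s by auto
  then have "t \<in> {0..<1}" using t s by auto
  then show False using nz t by auto
qed

lemma ivt_pos:
  fixes f :: "real \<Rightarrow> real"
  assumes cont: "continuous_on {0..1} f" and f0: "f 0 > 0" and nz: "\<forall>s\<in>{0..<1}. f s \<noteq> 0"
    and s: "s \<in> {0..1}"
  shows "f s \<ge> 0"
  using ivt_neg[of "\<lambda>t. - f t" s] assms by (auto intro: continuous_intros)

locale fp = geo n h x y U for n h and x :: "nat \<Rightarrow> real^'p" and y U +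
  fixes \<beta>
  assumes bF: "\<beta> \<in> frontier U"
begin

definition "c = sorted_sq n x y h \<beta>"
definition "L = {i. i<n \<and> (r i \<beta>)\<^sup>2 < c}"
definition "T = {i. i<n \<and> (r i \<beta>)\<^sup>2 = c}"
definition "Up = {i. i<n \<and> (r i \<beta>)\<^sup>2 > c}"
definition "\<sigma> a = sgn (r a \<beta>)"
definition "z a = \<sigma> a *\<^sub>R x a"
definition "sc = sqrt c"

lemma c_pos: "c > 0" unfolding c_def using A2 by simp
lemma sc_pos: "sc > 0" unfolding sc_def using c_pos by simp
lemma sc_sq: "sc\<^sup>2 = c" unfolding sc_def using c_pos by simp

lemma part: "i < n \<Longrightarrow> i \<in> L \<or> i \<in> T \<or> i \<in> Up"
  unfolding L_def T_def Up_def by auto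

lemma LT_eq: "L \<union> T = {i. i<n \<and> (r i \<beta>)\<^sup>2 \<le> c}" unfolding L_def T_def by auto

lemma cL: "card L < h" using frontier_tie(1)[OF bF] unfolding L_def c_def .
lemma cLT: "h < card (L \<union> T)" using frontier_tie(2)[OF bF] unfolding LT_eq c_def .
lemma subLT: "L \<union> T \<subseteq> {..<n}" unfolding L_def T_def by auto
lemma subUp: "Up \<subseteq> {..<n}" unfolding Up_def by auto
lemma finL: "finite L" unfolding L_def by simp
lemma finT: "finite T" unfolding T_def by simp

lemma T_ne: "T \<noteq> {}"
proof
  assume "T = {}"
  then have "card (L \<union> T) = card L" by simp
  then show False using cL cLT by simp
qed

lemma sigT: assumes "a \<in> T" shows "\<sigma> a * r a \<beta> = sc" "\<sigma> a = 1 \<or> \<sigma> a = -1" "r a \<beta> \<noteq> 0"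
proof -
  have sq: "(r a \<beta>)\<^sup>2 = c" using assms unfolding T_def by simp
  then show nz: "r a \<beta> \<noteq> 0" using c_pos by auto
  have "\<bar>r a \<beta>\<bar> = sc" unfolding sc_def using sq by (metis real_sqrt_abs)
  then show "\<sigma> a * r a \<beta> = sc" unfolding \<sigma>_def using nz by (cases "r a \<beta> > 0") (auto simp: sgn_real_def)
  show "\<sigma> a = 1 \<or> \<sigma> a = -1" unfolding \<sigma>_def using nz by (simp add: sgn_real_def)
qed

lemma sig_sq: "a \<in> T \<Longrightarrow> \<sigma> a * \<sigma> a = 1" using sigT(2) by fastforce

lemma mv: "a \<in> T \<Longrightarrow> \<sigma> a * r a (\<beta> + s *\<^sub>R e) = sc - s * (z a \<bullet> e)"
proof -
  assume a: "a \<in> T"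
  have eq: "r a (\<beta> + s *\<^sub>R e) = r a \<beta> - s * (x a \<bullet> e)" unfolding resid_def by (simp add: inner_add_right)
  have "\<sigma> a * r a (\<beta> + s *\<^sub>R e) = \<sigma> a * r a \<beta> - s * (\<sigma> a * (x a \<bullet> e))"
    unfolding eq by (simp add: algebra_simps)
  also have "\<dots> = sc - s * (z a \<bullet> e)" using sigT(1)[OF a] unfolding z_def by simp
  finally show ?thesis .
qed

lemma mv_gen: "a \<in> T \<Longrightarrow> \<sigma> a * r a (u + s *\<^sub>R e) = \<sigma> a * r a u - s * (z a \<bullet> e)"
proof -
  assume a: "a \<in> T"
  have eq: "r a (u + s *\<^sub>R e) = r a u - s * (x a \<bullet> e)" unfolding resid_def by (simp add: inner_add_right)
  show ?thesis unfolding eq z_def by (simp add: algebra_simps)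
qed

lemma sq_sig: "a \<in> T \<Longrightarrow> (\<sigma> a * v)\<^sup>2 = v\<^sup>2"
  using sig_sq by (simp add: power2_eq_square algebra_simps)

end


context fp begin

lemma seg_T:
  assumes ze: "\<forall>a\<in>T. z a \<bullet> e = \<kappa>" and a: "a \<in> T"
  shows "\<sigma> a * r a (\<beta> + s *\<^sub>R e) = sc - s * \<kappa>" "(r a (\<beta> + s *\<^sub>R e))\<^sup>2 = (sc - s * \<kappa>)\<^sup>2"
proof -
  show 1: "\<sigma> a * r a (\<beta> + s *\<^sub>R e) = sc - s * \<kappa>" using mv[OF a, of s e] ze a by simp
  have "(\<sigma> a * r a (\<beta> + s *\<^sub>R e))\<^sup>2 = (r a (\<beta> + s *\<^sub>R e))\<^sup>2" by (rule sq_sig[OF a])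
  then show "(r a (\<beta> + s *\<^sub>R e))\<^sup>2 = (sc - s * \<kappa>)\<^sup>2" using 1 by simp
qed

lemma seg_signs:
  assumes nc: "\<forall>s\<in>{0..<1}. \<forall>j\<in>L\<union>Up. (r j (\<beta> + s *\<^sub>R e))\<^sup>2 \<noteq> (sc - s*\<kappa>)\<^sup>2"
    and s: "s \<in> {0..1}"
  shows "\<forall>j\<in>L. (r j (\<beta> + s *\<^sub>R e))\<^sup>2 \<le> (sc - s*\<kappa>)\<^sup>2" "\<forall>j\<in>Up. (r j (\<beta> + s *\<^sub>R e))\<^sup>2 \<ge> (sc - s*\<kappa>)\<^sup>2"
proof -
  have cont: "continuous_on {0..1} (\<lambda>t. (r j (\<beta> + t *\<^sub>R e))\<^sup>2 - (sc - t*\<kappa>)\<^sup>2)" for j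
    unfolding resid_def by (intro continuous_intros)
  show "\<forall>j\<in>L. (r j (\<beta> + s *\<^sub>R e))\<^sup>2 \<le> (sc - s*\<kappa>)\<^sup>2"
  proof
    fix j assume j: "j \<in> L"
    have "(\<lambda>t. (r j (\<beta> + t *\<^sub>R e))\<^sup>2 - (sc - t*\<kappa>)\<^sup>2) s \<le> 0"
    proof (rule ivt_neg[OF cont _ _ s])
      show "(r j (\<beta> + 0 *\<^sub>R e))\<^sup>2 - (sc - 0*\<kappa>)\<^sup>2 < 0" using j sc_sq unfolding L_def by simp
      show "\<forall>t\<in>{0..<1}. (r j (\<beta> + t *\<^sub>R e))\<^sup>2 - (sc - t*\<kappa>)\<^sup>2 \<noteq> 0" using nc j by auto
    qed
    then show "(r j (\<beta> + s *\<^sub>R e))\<^sup>2 \<le> (sc - s*\<kappa>)\<^sup>2" by simp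
  qed
  show "\<forall>j\<in>Up. (r j (\<beta> + s *\<^sub>R e))\<^sup>2 \<ge> (sc - s*\<kappa>)\<^sup>2"
  proof
    fix j assume j: "j \<in> Up"
    have "(\<lambda>t. (r j (\<beta> + t *\<^sub>R e))\<^sup>2 - (sc - t*\<kappa>)\<^sup>2) s \<ge> 0"
    proof (rule ivt_pos[OF cont _ _ s])
      show "(r j (\<beta> + 0 *\<^sub>R e))\<^sup>2 - (sc - 0*\<kappa>)\<^sup>2 > 0" using j sc_sq unfolding Up_def by simp
      show "\<forall>t\<in>{0..<1}. (r j (\<beta> + t *\<^sub>R e))\<^sup>2 - (sc - t*\<kappa>)\<^sup>2 \<noteq> 0" using nc j by auto
    qed
    then show "(r j (\<beta> + s *\<^sub>R e))\<^sup>2 \<ge> (sc - s*\<kappa>)\<^sup>2" by simp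
  qed
qed

lemma seg_tie:
  assumes ze: "\<forall>a\<in>T. z a \<bullet> e = \<kappa>"
    and nc: "\<forall>s\<in>{0..<1}. \<forall>j\<in>L\<union>Up. (r j (\<beta> + s *\<^sub>R e))\<^sup>2 \<noteq> (sc - s*\<kappa>)\<^sup>2"
    and s: "s \<in> {0..1}"
  shows "sorted_sq n x y h (\<beta> + s *\<^sub>R e) = (sc - s*\<kappa>)\<^sup>2"
    "sorted_sq n x y (Suc h) (\<beta> + s *\<^sub>R e) = (sc - s*\<kappa>)\<^sup>2"
    "\<beta> + s *\<^sub>R e \<notin> Uset n h x y"
    "sc - s * \<kappa> > 0"
proof -
  have tp: "sorted_sq n x y h (\<beta> + t *\<^sub>R e) = (sc - t*\<kappa>)\<^sup>2 \<and>
      sorted_sq n x y (Suc h) (\<beta> + t *\<^sub>R e) = (sc - t*\<kappa>)\<^sup>2 \<and> \<beta> + t *\<^sub>R e \<notin> Uset n h x y"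
    if t: "t \<in> {0..1}" for t
  proof -
    note sg = seg_signs[OF nc t]
    have "sorted_sq n x y h (\<beta> + t *\<^sub>R e) = (sc - t*\<kappa>)\<^sup>2"
      "sorted_sq n x y (Suc h) (\<beta> + t *\<^sub>R e) = (sc - t*\<kappa>)\<^sup>2"
      "\<beta> + t *\<^sub>R e \<notin> Uset n h x y"
      by (rule tie_point[OF part cL cLT subLT, of "\<beta> + t *\<^sub>R e" "(sc - t*\<kappa>)\<^sup>2"];
          use sg seg_T[OF ze] in auto)+
    then show ?thesis by simp
  qed
  then show "sorted_sq n x y h (\<beta> + s *\<^sub>R e) = (sc - s*\<kappa>)\<^sup>2"
    "sorted_sq n x y (Suc h) (\<beta> + s *\<^sub>R e) = (sc - s*\<kappa>)\<^sup>2"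
    "\<beta> + s *\<^sub>R e \<notin> Uset n h x y" using s by auto
  have nz: "sc - t * \<kappa> \<noteq> 0" if t: "t \<in> {0..1}" for t
  proof
    assume "sc - t * \<kappa> = 0"
    then have "sorted_sq n x y h (\<beta> + t *\<^sub>R e) = 0" using tp[OF t] by simp
    then show False using A2 by (metis less_irrefl)
  qed
  have "(\<lambda>t. sc - t * \<kappa>) s \<ge> 0"
    by (rule ivt_pos) (use nz sc_pos s in \<open>auto intro!: continuous_intros\<close>)
  then show "sc - s * \<kappa> > 0" using nz[OF s] by simp
qed

lemma seg_closure:
  assumes ze: "\<forall>a\<in>T. z a \<bullet> e = \<kappa>"
    and nc: "\<forall>s\<in>{0..<1}. \<forall>j\<in>L\<union>Up. (r j (\<beta> + s *\<^sub>R e))\<^sup>2 \<noteq> (sc - s*\<kappa>)\<^sup>2"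
    and s0: "s0 \<in> {0..<1}"
  shows "\<beta> + s0 *\<^sub>R e \<in> closure U"
proof -
  obtain a0 where a0: "a0 \<in> T" using T_ne by blast
  define O1 where "O1 = {\<gamma>. \<forall>i\<in>L. \<forall>a\<in>T. (r i \<gamma>)\<^sup>2 < (r a \<gamma>)\<^sup>2}"
  define O2 where "O2 = {\<gamma>. \<forall>a\<in>T. \<forall>j\<in>Up. (r a \<gamma>)\<^sup>2 < (r j \<gamma>)\<^sup>2}"
  define O3 where "O3 = {\<gamma>. \<forall>a\<in>T. 0 < \<sigma> a * r a \<gamma>}"
  define Og where "Og = O1 \<inter> O2 \<inter> O3"
  have fUp: "finite Up" using subUp finite_subset by blast
  have oO: "open Og"
  proof -
    have "open O1" unfolding O1_def by (rule open_sepset[OF finL finT])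
    moreover have "open O2" unfolding O2_def by (rule open_sepset[OF finT fUp])
    moreover have "O3 = (\<Inter>a\<in>T. {\<gamma>. 0 < \<sigma> a * r a \<gamma>})" unfolding O3_def by auto
    moreover have "open (\<Inter>a\<in>T. {\<gamma>. 0 < \<sigma> a * r a \<gamma>})"
      using finT by (intro open_INT ballI open_Collect_less) (auto simp: resid_def intro!: continuous_intros)
    ultimately show ?thesis unfolding Og_def by auto
  qed
  define K where "K = (\<lambda>s. \<beta> + s *\<^sub>R e) ` {0..s0}"
  have cK: "compact K" unfolding K_def
    by (rule compact_continuous_image) (auto intro!: continuous_intros)
  have strict: "(\<forall>j\<in>L. (r j (\<beta> + s *\<^sub>R e))\<^sup>2 < (sc - s*\<kappa>)\<^sup>2) \<and>
      (\<forall>j\<in>Up. (r j (\<beta> + s *\<^sub>R e))\<^sup>2 > (sc - s*\<kappa>)\<^sup>2)" if s: "s \<in> {0..<1}" for s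
  proof -
    have s': "s \<in> {0..1}" using s by auto
    note le = seg_signs[OF nc s']
    have ne: "\<forall>j\<in>L\<union>Up. (r j (\<beta> + s *\<^sub>R e))\<^sup>2 \<noteq> (sc - s*\<kappa>)\<^sup>2" using nc s by blast
    show ?thesis
    proof (intro conjI ballI)
      fix j assume j: "j \<in> L"
      then have "(r j (\<beta> + s *\<^sub>R e))\<^sup>2 \<le> (sc - s*\<kappa>)\<^sup>2" "(r j (\<beta> + s *\<^sub>R e))\<^sup>2 \<noteq> (sc - s*\<kappa>)\<^sup>2"
        using le ne by auto
      then show "(r j (\<beta> + s *\<^sub>R e))\<^sup>2 < (sc - s*\<kappa>)\<^sup>2" by simp
    next
      fix j assume j: "j \<in> Up"
      then have "(r j (\<beta> + s *\<^sub>R e))\<^sup>2 \<ge> (sc - s*\<kappa>)\<^sup>2" "(r j (\<beta> + s *\<^sub>R e))\<^sup>2 \<noteq> (sc - s*\<kappa>)\<^sup>2"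
        using le ne by auto
      then show "(r j (\<beta> + s *\<^sub>R e))\<^sup>2 > (sc - s*\<kappa>)\<^sup>2" by simp
    qed
  qed
  have KO: "K \<subseteq> Og"
  proof
    fix k assume "k \<in> K"
    then obtain s where s: "s \<in> {0..s0}" and k: "k = \<beta> + s *\<^sub>R e" unfolding K_def by auto
    have s1: "s \<in> {0..<1}" using s s0 by auto
    have s2: "s \<in> {0..1}" using s1 by auto
    note st = strict[OF s1]
    have T1: "\<And>a. a \<in> T \<Longrightarrow> (r a k)\<^sup>2 = (sc - s*\<kappa>)\<^sup>2" using seg_T(2)[OF ze] k by simp
    have T2: "\<And>a. a \<in> T \<Longrightarrow> \<sigma> a * r a k = sc - s*\<kappa>" using seg_T(1)[OF ze] k by simp
    have pos: "sc - s * \<kappa> > 0" using seg_tie(4)[OF ze nc s2] .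
    show "k \<in> Og" unfolding Og_def O1_def O2_def O3_def using st T1 T2 pos k by auto
  qed
  obtain \<epsilon> where ep: "\<epsilon> > 0" and epB: "\<And>k. k \<in> K \<Longrightarrow> \<exists>G\<in>{Og}. ball k \<epsilon> \<subseteq> G"
    using Heine_Borel_lemma[OF cK, of "{Og}"] KO oO by auto
  have bcl: "\<beta> \<in> closure U" using bF frontierU by auto
  show ?thesis unfolding closure_approachable
  proof (intro allI impI)
    fix \<delta> :: real assume dp: "\<delta> > 0"
    obtain u where u: "u \<in> U" "dist u \<beta> < min \<delta> \<epsilon>"
      using bcl dp ep unfolding closure_approachable by (metis min_less_iff_conj)
    have inO: "u + s *\<^sub>R e \<in> Og" if s: "s \<in> {0..s0}" for s
    proof -
      have "\<beta> + s *\<^sub>R e \<in> K" unfolding K_def using s by auto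
      then have "ball (\<beta> + s *\<^sub>R e) \<epsilon> \<subseteq> Og" using epB by blast
      moreover have "dist (\<beta> + s *\<^sub>R e) (u + s *\<^sub>R e) < \<epsilon>" using u(2) by (simp add: dist_commute)
      ultimately show ?thesis by auto
    qed
    have s00: "0 \<in> {0..s0}" using s0 by auto
    have uO: "u \<in> Og" using inO[OF s00] by simp
    have uO1: "\<And>i a. i \<in> L \<Longrightarrow> a \<in> T \<Longrightarrow> (r i u)\<^sup>2 < (r a u)\<^sup>2" using uO unfolding Og_def O1_def by auto
    have uO2: "\<And>a j. a \<in> T \<Longrightarrow> j \<in> Up \<Longrightarrow> (r a u)\<^sup>2 < (r j u)\<^sup>2" using uO unfolding Og_def O2_def by auto
    have uUs: "u \<in> Uset n h x y" using u(1) USub by auto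
    then obtain H where sH: "sep n h (\<lambda>i. (r i u)\<^sup>2) H" using Uset_iff[OF h1 hn] by blast
    have Hn: "H \<subseteq> {..<n}" and cH: "card H = h"
      and Hs: "\<And>i j. i \<in> H \<Longrightarrow> j < n \<Longrightarrow> j \<notin> H \<Longrightarrow> (r i u)\<^sup>2 < (r j u)\<^sup>2"
      using sH unfolding sep_def by auto
    have LH: "L \<subseteq> H"
    proof
      fix i assume iL: "i \<in> L"
      show "i \<in> H"
      proof (rule ccontr)
        assume iH: "i \<notin> H"
        have iN: "i < n" using iL unfolding L_def by simp
        have "H \<subseteq> L"
        proof
          fix k assume kH: "k \<in> H"
          have kn: "k < n" using kH Hn by auto
          have lt: "(r k u)\<^sup>2 < (r i u)\<^sup>2" using Hs[OF kH iN iH] .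
          have "k \<notin> T" using uO1[OF iL] lt by force
          moreover have "k \<notin> Up" using uO1[OF iL a0] uO2[OF a0] lt by force
          ultimately show "k \<in> L" using part[OF kn] by blast
        qed
        then have "card H \<le> card L" using finL by (rule card_mono[rotated])
        then show False using cH cL by simp
      qed
    qed
    have HUp: "j \<notin> Up" if jH: "j \<in> H" for j
    proof
      assume jU: "j \<in> Up"
      have "L \<union> T \<subseteq> H"
      proof
        fix k assume kLT: "k \<in> L \<union> T"
        show "k \<in> H"
        proof (rule ccontr)
          assume kH: "k \<notin> H"
          have kn: "k < n" using kLT subLT by auto
          have lt: "(r j u)\<^sup>2 < (r k u)\<^sup>2" using Hs[OF jH kn kH] .
          show False
          proof (cases "k \<in> L")
            case True then show False using uO1[OF True a0] uO2[OF a0 jU] lt by simp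
          next
            case False then have "k \<in> T" using kLT by simp
            then show False using uO2[OF _ jU] lt by force
          qed
        qed
      qed
      moreover have "j \<notin> L \<union> T" using jU unfolding L_def T_def Up_def by auto
      ultimately have "insert j (L \<union> T) \<subseteq> H" using jH by auto
      then have "card (insert j (L \<union> T)) \<le> card H" using Hn finite_subset by (intro card_mono) auto
      moreover have "card (insert j (L \<union> T)) = Suc (card (L \<union> T))"
        using \<open>j \<notin> L \<union> T\<close> finL finT by simp
      ultimately show False using cH cLT by simp
    qed
    have sepall: "sep n h (\<lambda>i. (r i (u + s *\<^sub>R e))\<^sup>2) H" if s: "s \<in> {0..s0}" for s
      unfolding sep_def
    proof (intro conjI Hn cH ballI allI impI)
      define \<gamma> where "\<gamma> = u + s *\<^sub>R e"
      have gO: "\<gamma> \<in> Og" unfolding \<gamma>_def using inO[OF s] .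
      have gO1: "\<And>i a. i \<in> L \<Longrightarrow> a \<in> T \<Longrightarrow> (r i \<gamma>)\<^sup>2 < (r a \<gamma>)\<^sup>2" using gO unfolding Og_def O1_def by auto
      have gO2: "\<And>a j. a \<in> T \<Longrightarrow> j \<in> Up \<Longrightarrow> (r a \<gamma>)\<^sup>2 < (r j \<gamma>)\<^sup>2" using gO unfolding Og_def O2_def by auto
      have gO3: "\<And>a. a \<in> T \<Longrightarrow> 0 < \<sigma> a * r a \<gamma>" using gO unfolding Og_def O3_def by auto
      have uO3: "\<And>a. a \<in> T \<Longrightarrow> 0 < \<sigma> a * r a u" using uO unfolding Og_def O3_def by auto
      fix i j assume iH: "i \<in> H" and jn: "j < n" and jH: "j \<notin> H"
      have iLT: "i \<in> L \<or> i \<in> T" using part[of i] iH Hn HUp[OF iH] by auto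
      have jTU: "j \<in> T \<or> j \<in> Up" using part[OF jn] jH LH by auto
      have "(r i \<gamma>)\<^sup>2 < (r j \<gamma>)\<^sup>2"
      proof (cases "i \<in> L")
        case iL: True
        show ?thesis
        proof (cases "j \<in> T")
          case True then show ?thesis using gO1[OF iL] by simp
        next
          case False then have "j \<in> Up" using jTU by simp
          then show ?thesis using gO1[OF iL a0] gO2[OF a0] by force
        qed
      next
        case False
        then have iT: "i \<in> T" using iLT by simp
        show ?thesis
        proof (cases "j \<in> Up")
          case True then show ?thesis using gO2[OF iT] by simp
        next
          case False
          then have jT: "j \<in> T" using jTU by simp
          have lu: "(r i u)\<^sup>2 < (r j u)\<^sup>2" using Hs[OF iH jn jH] .
          have "\<sigma> i * r i u < \<sigma> j * r j u"
          proof (rule ccontr)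
            assume "\<not> ?thesis"
            then have "\<sigma> j * r j u \<le> \<sigma> i * r i u" by simp
            then have "(\<sigma> j * r j u)\<^sup>2 \<le> (\<sigma> i * r i u)\<^sup>2"
              using uO3[OF jT] by (intro power_mono) auto
            then show False using lu sq_sig[OF iT] sq_sig[OF jT] by simp
          qed
          then have "\<sigma> i * r i \<gamma> < \<sigma> j * r j \<gamma>"
            unfolding \<gamma>_def using mv_gen[OF iT, of u s e] mv_gen[OF jT, of u s e] ze iT jT by simp
          then have "(\<sigma> i * r i \<gamma>)\<^sup>2 < (\<sigma> j * r j \<gamma>)\<^sup>2"
            using gO3[OF iT] by (intro power_strict_mono) auto
          then show ?thesis using sq_sig[OF iT] sq_sig[OF jT] by simp
        qed
      qed
      then show "(r i (u + s *\<^sub>R e))\<^sup>2 < (r j (u + s *\<^sub>R e))\<^sup>2" unfolding \<gamma>_def .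
    qed
    define P where "P = (\<lambda>s. u + s *\<^sub>R e) ` {0..s0}"
    have PU: "P \<subseteq> Uset n h x y" unfolding P_def using sepall Uset_iff[OF h1 hn] by blast
    have cP: "connected P" unfolding P_def
      by (rule connected_continuous_image) (auto intro!: continuous_intros)
    have "u \<in> P" unfolding P_def using s00 by force
    then have "U \<inter> P \<noteq> {}" using u(1) by auto
    then have "P \<subseteq> U" using components_maximal[OF U cP PU] by simp
    moreover have "u + s0 *\<^sub>R e \<in> P" unfolding P_def using s0 by auto
    moreover have "dist (u + s0 *\<^sub>R e) (\<beta> + s0 *\<^sub>R e) < \<delta>" using u(2) by simp
    ultimately show "\<exists>y\<in>U. dist y (\<beta> + s0 *\<^sub>R e) < \<delta>" by blast
  qed
qed

end


context geo begin
definition "Dset \<gamma> = {sgn (r a \<gamma>) *\<^sub>R x a - sgn (r b \<gamma>) *\<^sub>R x b | a b.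
   a < n \<and> b < n \<and> (r a \<gamma>)\<^sup>2 = sorted_sq n x y h \<gamma> \<and> (r b \<gamma>)\<^sup>2 = sorted_sq n x y h \<gamma>}"
definition "rk \<gamma> = dim (Dset \<gamma>)"
end

context fp begin

definition "D = {z a - z b | a b. a \<in> T \<and> b \<in> T}"

lemma D_eq: "Dset \<beta> = D"
  unfolding Dset_def D_def z_def \<sigma>_def T_def c_def by blast

lemma seg_frontier:
  assumes ze: "\<forall>a\<in>T. z a \<bullet> e = \<kappa>"
    and nc: "\<forall>s\<in>{0..<1}. \<forall>j\<in>L\<union>Up. (r j (\<beta> + s *\<^sub>R e))\<^sup>2 \<noteq> (sc - s*\<kappa>)\<^sup>2"
    and s: "s \<in> {0..1}"
  shows "\<beta> + s *\<^sub>R e \<in> frontier U"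
proof -
  define A where "A = (\<lambda>t. \<beta> + t *\<^sub>R e) -` closure U"
  have cA: "closed A" unfolding A_def by (rule closed_vimage) (auto intro!: continuous_intros)
  have "{0..<1} \<subseteq> A" unfolding A_def using seg_closure[OF ze nc] by auto
  then have "closure {0..<1} \<subseteq> A" using cA by (rule closure_minimal)
  then have "{0..1} \<subseteq> A" using closure_atLeastLessThan[of "0::real" 1] by simp
  then have "\<beta> + s *\<^sub>R e \<in> closure U" using s unfolding A_def by auto
  moreover have "\<beta> + s *\<^sub>R e \<notin> U" using seg_tie(3)[OF ze nc s] USub by auto
  ultimately show ?thesis using frontierU by simp
qed

lemma move_step:
  assumes ze: "\<forall>a\<in>T. z a \<bullet> e = \<kappa>"
    and nc: "\<forall>s\<in>{0..<1}. \<forall>j\<in>L\<union>Up. (r j (\<beta> + s *\<^sub>R e))\<^sup>2 \<noteq> (sc - s*\<kappa>)\<^sup>2"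
    and j: "j \<in> L \<union> Up" and cr: "(r j (\<beta> + e))\<^sup>2 = (sc - \<kappa>)\<^sup>2"
    and orth: "\<forall>v\<in>D. e \<bullet> v = 0"
  shows "rk (\<beta> + e) > rk \<beta>"
proof -
  define \<beta>1 where "\<beta>1 = \<beta> + e"
  have s1: "(1::real) \<in> {0..1}" by simp
  have b1: "\<beta> + 1 *\<^sub>R e = \<beta>1" unfolding \<beta>1_def by simp
  define \<psi> where "\<psi> = sc - \<kappa>"
  have pos: "\<psi> > 0" using seg_tie(4)[OF ze nc s1] unfolding \<psi>_def by simp
  have fh: "sorted_sq n x y h \<beta>1 = \<psi>\<^sup>2" using seg_tie(1)[OF ze nc s1] b1 unfolding \<psi>_def by simp
  have Tsq: "(r a \<beta>1)\<^sup>2 = \<psi>\<^sup>2" if "a \<in> T" for a using seg_T(2)[OF ze that, of 1] b1 unfolding \<psi>_def by simp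
  have Tsg: "sgn (r a \<beta>1) = \<sigma> a" if a: "a \<in> T" for a
  proof -
    have e1: "\<sigma> a * r a \<beta>1 = \<psi>" using seg_T(1)[OF ze a, of 1] b1 unfolding \<psi>_def by simp
    show ?thesis using sigT(2)[OF a] e1 pos by (auto simp: sgn_real_def)
  qed
  have jn: "j < n" using j unfolding L_def Up_def by auto
  have jsq: "(r j \<beta>1)\<^sup>2 = \<psi>\<^sup>2" using cr unfolding \<beta>1_def \<psi>_def .
  obtain a0 where a0: "a0 \<in> T" using T_ne by blast
  have a0n: "a0 < n" using a0 unfolding T_def by simp
  define \<tau> where "\<tau> = sgn (r j \<beta>1)"
  define v where "v = \<tau> *\<^sub>R x j - z a0"
  have sub: "insert v D \<subseteq> Dset \<beta>1"
  proof
    fix w assume "w \<in> insert v D"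
    then show "w \<in> Dset \<beta>1"
    proof
      assume "w = v"
      then show ?thesis unfolding Dset_def v_def \<tau>_def z_def
        using jn a0n fh jsq Tsq[OF a0] Tsg[OF a0] by (intro CollectI exI[of _ j] exI[of _ a0]) auto
    next
      assume "w \<in> D"
      then obtain a b where ab: "a \<in> T" "b \<in> T" "w = z a - z b" unfolding D_def by auto
      have "a < n" "b < n" using ab unfolding T_def by auto
      then show ?thesis unfolding Dset_def z_def
        using ab fh Tsq Tsg by (intro CollectI exI[of _ a] exI[of _ b]) (auto simp: z_def)
    qed
  qed
  have rj0: "r j \<beta>1 \<noteq> 0" using jsq pos by auto
  have tau: "\<tau> = 1 \<or> \<tau> = -1" unfolding \<tau>_def using rj0 by (simp add: sgn_real_def)
  have tau2: "\<tau> * \<tau> = 1" using tau by auto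
  have tr: "\<tau> * r j \<beta>1 = \<psi>"
  proof -
    have "\<bar>r j \<beta>1\<bar> = \<psi>" using jsq pos by (metis abs_of_pos power2_eq_iff abs_minus_cancel)
    then show ?thesis unfolding \<tau>_def using rj0 by (cases "r j \<beta>1 > 0") (auto simp: sgn_real_def)
  qed
  have ve: "v \<bullet> e \<noteq> 0"
  proof
    assume "v \<bullet> e = 0"
    then have xe: "\<tau> * (x j \<bullet> e) = \<kappa>" using ze a0 unfolding v_def by (simp add: inner_diff_left)
    have eq: "r j \<beta> = r j \<beta>1 + x j \<bullet> e" unfolding \<beta>1_def resid_def by (simp add: inner_add_right)
    have "\<tau> * r j \<beta> = \<tau> * r j \<beta>1 + \<tau> * (x j \<bullet> e)" unfolding eq by (simp add: algebra_simps)
    then have "\<tau> * r j \<beta> = sc" using tr xe unfolding \<psi>_def by simp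
    then have "(\<tau> * r j \<beta>)\<^sup>2 = c" using sc_sq by simp
    moreover have "(\<tau> * r j \<beta>)\<^sup>2 = (r j \<beta>)\<^sup>2" using tau2 by (simp add: power2_eq_square algebra_simps)
    ultimately have "(r j \<beta>)\<^sup>2 = c" by simp
    then show False using j unfolding L_def Up_def by auto
  qed
  have "v \<notin> span D"
  proof
    assume "v \<in> span D"
    then have "orthogonal e v" by (rule orthogonal_to_span) (use orth in \<open>auto simp: orthogonal_def\<close>)
    then show False using ve by (simp add: orthogonal_def inner_commute)
  qed
  then have "dim (insert v D) = dim D + 1" by (simp add: dim_insert)
  moreover have "dim (insert v D) \<le> dim (Dset \<beta>1)" using sub by (rule dim_subset)
  ultimately show ?thesis unfolding rk_def D_eq \<beta>1_def[symmetric] by simp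
qed

end


lemma card_pos_arith: "(CARD('a::finite) \<le> CARD('a) - Suc 0) = False"
proof -
  have "0 < CARD('a)" by (rule zero_less_card_finite)
  then show ?thesis by arith
qed

context fp begin

lemma line_contra:
  assumes d0: "d \<noteq> 0" and zd: "\<forall>a\<in>T. z a \<bullet> d = \<kappa>"
    and nc: "\<forall>t. \<forall>j\<in>L\<union>Up. (r j (\<beta> + t *\<^sub>R d))\<^sup>2 \<noteq> (sc - t*\<kappa>)\<^sup>2"
  shows False
proof -
  have at: "sc - t*\<kappa> > 0 \<and> (\<forall>j\<in>L. (r j (\<beta> + t *\<^sub>R d))\<^sup>2 \<le> (sc - t*\<kappa>)\<^sup>2)
      \<and> (\<forall>j\<in>Up. (r j (\<beta> + t *\<^sub>R d))\<^sup>2 \<ge> (sc - t*\<kappa>)\<^sup>2)" for t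
  proof -
    have ze: "\<forall>a\<in>T. z a \<bullet> (t *\<^sub>R d) = t * \<kappa>" using zd by simp
    have nc': "\<forall>s\<in>{0..<1}. \<forall>j\<in>L\<union>Up. (r j (\<beta> + s *\<^sub>R (t *\<^sub>R d)))\<^sup>2 \<noteq> (sc - s*(t*\<kappa>))\<^sup>2"
    proof (intro ballI)
      fix s :: real and j assume "s \<in> {0..<1}" "j \<in> L \<union> Up"
      then show "(r j (\<beta> + s *\<^sub>R (t *\<^sub>R d)))\<^sup>2 \<noteq> (sc - s*(t*\<kappa>))\<^sup>2"
        using nc[rule_format, of j "s*t"] by (simp add: mult.assoc)
    qed
    have s1: "(1::real) \<in> {0..1}" by simp
    show ?thesis using seg_tie(4)[OF ze nc' s1] seg_signs[OF nc' s1] by simp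
  qed
  have k0: "\<kappa> = 0"
  proof (rule ccontr)
    assume "\<kappa> \<noteq> 0"
    then have "sc - (sc/\<kappa>)*\<kappa> = 0" by simp
    then show False using at[of "sc/\<kappa>"] by simp
  qed
  have xd: "x j \<bullet> d = 0" if jn: "j < n" for j
  proof (rule ccontr)
    assume nz: "x j \<bullet> d \<noteq> 0"
    have rl: "r j (\<beta> + t *\<^sub>R d) = r j \<beta> - t * (x j \<bullet> d)" for t
      unfolding resid_def by (simp add: inner_add_right)
    consider "j \<in> L" | "j \<in> T" | "j \<in> Up" using part[OF jn] by blast
    then show False
    proof cases
      case 1
      define t where "t = (r j \<beta> - sc - 1) / (x j \<bullet> d)"
      have rr: "r j (\<beta> + t *\<^sub>R d) = sc + 1" unfolding rl t_def using nz by simp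
      have "(r j (\<beta> + t *\<^sub>R d))\<^sup>2 \<le> (sc - t * \<kappa>)\<^sup>2" using at[of t] 1 by blast
      then have "(sc + 1)\<^sup>2 \<le> sc\<^sup>2" unfolding rr k0 by simp
      then show False using sc_pos by (simp add: power2_eq_square algebra_simps)
    next
      case 2
      have "z j \<bullet> d = \<sigma> j * (x j \<bullet> d)" unfolding z_def by simp
      then show False using zd 2 k0 nz sigT(2)[OF 2] by auto
    next
      case 3
      define t where "t = r j \<beta> / (x j \<bullet> d)"
      have rr: "r j (\<beta> + t *\<^sub>R d) = 0" unfolding rl t_def using nz by simp
      have "(r j (\<beta> + t *\<^sub>R d))\<^sup>2 \<ge> (sc - t * \<kappa>)\<^sup>2" using at[of t] 3 by blast
      then have "0 \<ge> sc\<^sup>2" unfolding rr k0 by simp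
      then show False using sc_pos by (metis not_less power2_eq_square zero_less_mult_iff)
    qed
  qed
  have "{x k + x (k+1) | k. k < n-1} \<subseteq> {v. d \<bullet> v = 0}"
  proof
    fix v assume "v \<in> {x k + x (k+1) | k. k < n-1}"
    then obtain k where k: "k < n - 1" "v = x k + x (k+1)" by auto
    have "x k \<bullet> d = 0" "x (k+1) \<bullet> d = 0" using xd k by auto
    then show "v \<in> {v. d \<bullet> v = 0}" using k by (simp add: inner_add_right inner_commute)
  qed
  then have "dim {x k + x (k+1) | k. k < n-1} \<le> dim {v. d \<bullet> v = 0}" by (rule dim_subset)
  then show False using dim_hyperplane[OF d0] A3 by (simp add: card_pos_arith)
qed

lemma improve:
  assumes "rk \<beta> < CARD('p)"
  shows "\<exists>\<gamma>\<in>frontier U. rk \<gamma> > rk \<beta>"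
proof -
  obtain d where d0: "d \<noteq> 0" and dor: "\<And>v. v \<in> span D \<Longrightarrow> orthogonal d v"
    using orthogonal_to_subspace_exists[of D] assms unfolding rk_def D_eq by auto
  have dD: "\<forall>v\<in>D. d \<bullet> v = 0" using dor span_base unfolding orthogonal_def by blast
  obtain a0 where a0: "a0 \<in> T" using T_ne by blast
  define \<kappa> where "\<kappa> = z a0 \<bullet> d"
  have zd: "\<forall>a\<in>T. z a \<bullet> d = \<kappa>"
  proof
    fix a assume a: "a \<in> T"
    have "z a - z a0 \<in> D" unfolding D_def using a a0 by blast
    then have "d \<bullet> (z a - z a0) = 0" using dD by blast
    then show "z a \<bullet> d = \<kappa>" unfolding \<kappa>_def by (simp add: inner_diff_right inner_commute)
  qed
  define Z where "Z = {t. \<exists>j\<in>L\<union>Up. (r j (\<beta> + t *\<^sub>R d))\<^sup>2 = (sc - t*\<kappa>)\<^sup>2}"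
  show ?thesis
  proof (cases "Z = {}")
    case True
    then have "\<forall>t. \<forall>j\<in>L\<union>Up. (r j (\<beta> + t *\<^sub>R d))\<^sup>2 \<noteq> (sc - t*\<kappa>)\<^sup>2" unfolding Z_def by blast
    then show ?thesis using line_contra[OF d0 zd] by blast
  next
    case False
    have fLU: "finite (L \<union> Up)" using finL subUp finite_subset by auto
    have "Z = (\<Union>j\<in>L\<union>Up. {t. (r j (\<beta> + t *\<^sub>R d))\<^sup>2 = (sc - t*\<kappa>)\<^sup>2})" unfolding Z_def by auto
    moreover have "closed \<dots>" using fLU
      by (intro closed_UN ballI closed_Collect_eq) (auto simp: resid_def intro!: continuous_intros)
    ultimately have cZ: "closed Z" by simp
    obtain ts where ts: "ts \<in> Z" and tmin: "\<And>t. t \<in> Z \<Longrightarrow> dist 0 ts \<le> dist 0 t"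
      using distance_attains_inf[OF cZ False, of 0] by blast
    have ts0: "ts \<noteq> 0"
    proof
      assume "ts = 0"
      then obtain j where j: "j \<in> L \<union> Up" "(r j \<beta>)\<^sup>2 = sc\<^sup>2" using ts unfolding Z_def by auto
      then show False using sc_sq unfolding L_def Up_def by auto
    qed
    define e where "e = ts *\<^sub>R d"
    have ze: "\<forall>a\<in>T. z a \<bullet> e = ts * \<kappa>" using zd unfolding e_def by simp
    have nc: "\<forall>s\<in>{0..<1}. \<forall>j\<in>L\<union>Up. (r j (\<beta> + s *\<^sub>R e))\<^sup>2 \<noteq> (sc - s*(ts*\<kappa>))\<^sup>2"
    proof (intro ballI notI)
      fix s :: real and j assume s: "s \<in> {0..<1}" and j: "j \<in> L \<union> Up"
        and eq: "(r j (\<beta> + s *\<^sub>R e))\<^sup>2 = (sc - s*(ts*\<kappa>))\<^sup>2"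
      have "s * ts \<in> Z" unfolding Z_def using j eq unfolding e_def by (auto simp: mult.assoc)
      then have "\<bar>ts\<bar> \<le> \<bar>s * ts\<bar>" using tmin by (simp add: dist_real_def)
      moreover have "\<bar>s * ts\<bar> < \<bar>ts\<bar>" using s ts0 by (simp add: abs_mult)
      ultimately show False by simp
    qed
    obtain j where j: "j \<in> L \<union> Up" and cr: "(r j (\<beta> + e))\<^sup>2 = (sc - ts*\<kappa>)\<^sup>2"
      using ts unfolding Z_def e_def by auto
    have orth: "\<forall>v\<in>D. e \<bullet> v = 0" using dD unfolding e_def by simp
    have "rk (\<beta> + e) > rk \<beta>" using move_step[OF ze nc j _ orth] cr by simp
    moreover have "\<beta> + e \<in> frontier U" using seg_frontier[OF ze nc, of 1] by simp
    ultimately show ?thesis by blast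
  qed
qed

end


context fp begin

lemma extract_sol:
  assumes full: "rk \<beta> = CARD('p)"
  shows "\<exists>idx s. (\<forall>k\<le>CARD('p). idx k < n) \<and> inj_on idx {0..CARD('p)}
     \<and> (\<forall>k<CARD('p). s k \<in> {1, -1 :: real})
     \<and> (\<forall>c :: nat \<Rightarrow> real. (\<Sum>k<CARD('p). c k *\<^sub>R (x (idx k) + s k *\<^sub>R x (idx (k+1)))) = 0
            \<longrightarrow> (\<forall>k<CARD('p). c k = 0))
     \<and> (\<forall>\<gamma>. (\<forall>k<CARD('p). (x (idx k) + s k *\<^sub>R x (idx (k+1))) \<bullet> \<gamma> = y (idx k) + s k * y (idx (k+1)))
            \<longleftrightarrow> \<gamma> = \<beta>)
     \<and> (resid x y (idx 0) \<beta>)\<^sup>2 = sorted_sq n x y h \<beta>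
     \<and> sorted_sq n x y h \<beta> = sorted_sq n x y (h+1) \<beta>"
proof -
  define p where "p = CARD('p)"
  obtain a0 where a0: "a0 \<in> T" using T_ne by blast
  define E where "E = {z a - z a0 | a. a \<in> T}"
  have DE: "D \<subseteq> span E"
  proof
    fix v assume "v \<in> D"
    then obtain a b where ab: "a \<in> T" "b \<in> T" "v = z a - z b" unfolding D_def by auto
    have "z a - z a0 \<in> span E" "z b - z a0 \<in> span E" unfolding E_def using ab by (auto intro: span_base)
    then have "(z a - z a0) - (z b - z a0) \<in> span E" by (rule span_diff)
    then show "v \<in> span E" using ab by simp
  qed
  have "span D = UNIV" using full unfolding rk_def D_eq by (simp add: dim_eq_full[symmetric])
  then have spE: "span E = UNIV" using span_minimal[OF DE subspace_span] by auto
  obtain B where B: "B \<subseteq> E" "independent B" "E \<subseteq> span B" "card B = dim E" by (rule basis_exists)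
  have dE: "dim E = p" unfolding p_def using spE dim_eq_full[of E] by simp
  have fB: "finite B" using B(2) by (rule finiteI_independent)
  have spB: "span B = UNIV" using span_minimal[OF B(3) subspace_span] spE by auto
  have B0: "0 \<notin> B" using B(2) dependent_zero by blast
  obtain en where en: "bij_betw en {0..<p} B" using ex_bij_betw_nat_finite[OF fB] B(4) dE by auto
  have enE: "\<exists>a. a \<in> T \<and> en k = z a - z a0" if "k < p" for k
  proof -
    have "en k \<in> B" using en that by (auto dest: bij_betwE)
    then show ?thesis using B(1) unfolding E_def by auto
  qed
  define aa where "aa k = (SOME a. a \<in> T \<and> en k = z a - z a0)" for k
  have aa: "aa k \<in> T" "en k = z (aa k) - z a0" if "k < p" for k
    using someI_ex[OF enE[OF that]] unfolding aa_def by auto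
  have aa0: "aa k \<noteq> a0" if "k < p" for k
  proof
    assume "aa k = a0"
    then have "en k = 0" using aa(2)[OF that] by simp
    moreover have "en k \<in> B" using en that by (auto dest: bij_betwE)
    ultimately show False using B0 by simp
  qed
  define idx where "idx k = (if k = 0 then a0 else aa (k-1))" for k
  have idxT: "idx k \<in> T" if "k \<le> p" for k
    unfolding idx_def using a0 aa(1)[of "k-1"] that by auto
  have idx_n: "\<forall>k\<le>p. idx k < n" using idxT unfolding T_def by auto
  have inj: "inj_on idx {0..p}"
  proof (rule inj_onI)
    fix i j assume i: "i \<in> {0..p}" and j: "j \<in> {0..p}" and eq: "idx i = idx j"
    show "i = j"
    proof (cases "i = 0")
      case True
      show ?thesis
      proof (rule ccontr)
        assume "i \<noteq> j"
        then have j0: "j \<noteq> 0" using True by simp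
        then have "j - 1 < p" using j by auto
        then have "aa (j-1) \<noteq> a0" by (rule aa0)
        then show False using eq True j0 unfolding idx_def by simp
      qed
    next
      case False
      have j0: "j \<noteq> 0"
      proof
        assume "j = 0"
        have "i - 1 < p" using i False by auto
        then have "aa (i-1) \<noteq> a0" by (rule aa0)
        then show False using eq False \<open>j = 0\<close> unfolding idx_def by simp
      qed
      then have "aa (i-1) = aa (j-1)" using eq False unfolding idx_def by simp
      then have "en (i-1) = en (j-1)" using aa(2)[of "i-1"] aa(2)[of "j-1"] i j False j0 by simp
      then have "i - 1 = j - 1" using en i j False j0 unfolding bij_betw_def inj_on_def by auto
      then show ?thesis using False j0 by simp
    qed
  qed
  define s where "s k = - \<sigma> (idx k) * \<sigma> (idx (k+1))" for k
  have s01: "\<forall>k<p. s k \<in> {1, -1}"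
  proof (intro allI impI)
    fix k assume k: "k < p"
    have "\<sigma> (idx k) = 1 \<or> \<sigma> (idx k) = -1" "\<sigma> (idx (k+1)) = 1 \<or> \<sigma> (idx (k+1)) = -1"
      using sigT(2) idxT k by auto
    then show "s k \<in> {1, -1}" unfolding s_def by auto
  qed
  define w where "w k = x (idx k) + s k *\<^sub>R x (idx (k+1))" for k
  have wz: "\<sigma> (idx k) *\<^sub>R w k = z (idx k) - z (idx (k+1))" if k: "k < p" for k
  proof -
    have t1: "idx k \<in> T" "idx (k+1) \<in> T" using idxT k by auto
    have "\<sigma> (idx k) *\<^sub>R w k = \<sigma> (idx k) *\<^sub>R x (idx k)
        - (\<sigma> (idx k) * \<sigma> (idx k)) *\<^sub>R (\<sigma> (idx (k+1)) *\<^sub>R x (idx (k+1)))"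
      unfolding w_def s_def by (simp add: algebra_simps scaleR_add_right)
    also have "\<dots> = z (idx k) - z (idx (k+1))" using sig_sq[OF t1(1)] unfolding z_def by simp
    finally show ?thesis .
  qed
  define W where "W = w ` {..<p}"
  have chain: "z (idx m) - z (idx 0) \<in> span W" if "m \<le> p" for m
    using that
  proof (induction m)
    case 0 then show ?case by (simp add: span_zero)
  next
    case (Suc m)
    have m: "m < p" using Suc.prems by simp
    have "w m \<in> span W" unfolding W_def using m by (auto intro: span_base)
    then have "\<sigma> (idx m) *\<^sub>R w m \<in> span W" by (rule span_scale)
    have "(z (idx m) - z (idx 0)) - \<sigma> (idx m) *\<^sub>R w m \<in> span W"
      by (rule span_diff) (use Suc.IH m \<open>\<sigma> (idx m) *\<^sub>R w m \<in> span W\<close> in auto)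
    then show ?case using wz[OF m] by simp
  qed
  have "B \<subseteq> span W"
  proof
    fix b assume "b \<in> B"
    then obtain k where k: "k < p" "b = en k" using en unfolding bij_betw_def by auto
    have "b = z (idx (k+1)) - z (idx 0)" unfolding idx_def using aa(2)[OF k(1)] k by simp
    then show "b \<in> span W" using chain[of "k+1"] k by simp
  qed
  then have spW: "span W = UNIV" using span_minimal[OF _ subspace_span, of B W] spB by auto
  have fW: "finite W" unfolding W_def by simp
  have dW: "dim W = p" unfolding p_def using spW dim_eq_full[of W] by simp
  have "card W \<le> p" unfolding W_def using card_image_le[of "{..<p}" w] by simp
  moreover have "dim W \<le> card W" using dim_le_card'[OF fW] .
  ultimately have cW: "card W = p" using dW by simp
  have injw: "inj_on w {..<p}" using eq_card_imp_inj_on[of "{..<p}" w] cW unfolding W_def by simp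
  have indW: "independent W" using card_eq_dim[of W W] cW dW fW span_superset by auto
  have indep: "\<forall>c :: nat \<Rightarrow> real. (\<Sum>k<p. c k *\<^sub>R w k) = 0 \<longrightarrow> (\<forall>k<p. c k = 0)"
  proof (rule allI, rule impI)
    fix c :: "nat \<Rightarrow> real" assume sum0: "(\<Sum>k<p. c k *\<^sub>R w k) = 0"
    define u where "u v = c (the_inv_into {..<p} w v)" for v
    have "(\<Sum>v\<in>W. u v *\<^sub>R v) = (\<Sum>k<p. u (w k) *\<^sub>R w k)" unfolding W_def
      using sum.reindex[OF injw, of "\<lambda>v. u v *\<^sub>R v"] by simp
    also have "\<dots> = (\<Sum>k<p. c k *\<^sub>R w k)" unfolding u_def
      by (rule sum.cong) (auto simp: the_inv_into_f_f[OF injw])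
    finally have "(\<Sum>v\<in>W. u v *\<^sub>R v) = 0" using sum0 by simp
    then have "\<forall>v\<in>W. u v = 0" using indW dependent_finite[OF fW] by blast
    then show "\<forall>k<p. c k = 0" unfolding W_def u_def using the_inv_into_f_f[OF injw] by auto
  qed
  have rT: "r a \<beta> = \<sigma> a * sc" if "a \<in> T" for a
  proof -
    have "\<sigma> a * (\<sigma> a * r a \<beta>) = \<sigma> a * sc" using sigT(1)[OF that] by simp
    then show ?thesis using sig_sq[OF that] by (simp add: mult.assoc[symmetric])
  qed
  have solb: "w k \<bullet> \<beta> = y (idx k) + s k * y (idx (k+1))" if k: "k < p" for k
  proof -
    have t1: "idx k \<in> T" "idx (k+1) \<in> T" using idxT k by auto
    have e1: "x (idx k) \<bullet> \<beta> = y (idx k) - \<sigma> (idx k) * sc" using rT[OF t1(1)] unfolding resid_def by simp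
    have e2: "x (idx (k+1)) \<bullet> \<beta> = y (idx (k+1)) - \<sigma> (idx (k+1)) * sc" using rT[OF t1(2)] unfolding resid_def by simp
    have "w k \<bullet> \<beta> = x (idx k) \<bullet> \<beta> + s k * (x (idx (k+1)) \<bullet> \<beta>)" unfolding w_def by (simp add: inner_add_left)
    also have "\<dots> = y (idx k) + s k * y (idx (k+1)) - \<sigma> (idx k) * sc + \<sigma> (idx k) * (\<sigma> (idx (k+1)) * \<sigma> (idx (k+1))) * sc"
      unfolding e1 e2 s_def by (simp add: algebra_simps)
    also have "\<dots> = y (idx k) + s k * y (idx (k+1))" using sig_sq[OF t1(2)] by simp
    finally show ?thesis .
  qed
  have uniq: "(\<forall>k<p. w k \<bullet> \<gamma> = y (idx k) + s k * y (idx (k+1))) \<longleftrightarrow> \<gamma> = \<beta>" for \<gamma>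
  proof
    assume eqs: "\<forall>k<p. w k \<bullet> \<gamma> = y (idx k) + s k * y (idx (k+1))"
    have "orthogonal (\<gamma> - \<beta>) v" if vW: "v \<in> W" for v
    proof -
      obtain k where k: "k < p" "v = w k" using vW unfolding W_def by auto
      have "w k \<bullet> (\<gamma> - \<beta>) = 0" using eqs solb[OF k(1)] k(1) by (simp add: inner_diff_right)
      then show ?thesis unfolding orthogonal_def using k by (simp add: inner_commute)
    qed
    then have "orthogonal (\<gamma> - \<beta>) (\<gamma> - \<beta>)" using orthogonal_to_span[of "\<gamma> - \<beta>" W] spW by auto
    then show "\<gamma> = \<beta>" unfolding orthogonal_def by simp
  next
    assume "\<gamma> = \<beta>" then show "\<forall>k<p. w k \<bullet> \<gamma> = y (idx k) + s k * y (idx (k+1))" using solb by simp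
  qed
  have last1: "(resid x y (idx 0) \<beta>)\<^sup>2 = sorted_sq n x y h \<beta>"
    using a0 unfolding idx_def T_def c_def by simp
  have last2: "sorted_sq n x y h \<beta> = sorted_sq n x y (h+1) \<beta>" using frontier_tie(3)[OF bF] by simp
  show ?thesis
    apply (rule exI[of _ idx], rule exI[of _ s])
    using idx_n inj s01 indep uniq last1 last2 unfolding p_def w_def by blast
qed

end


context geo begin

lemma exists_full:
  assumes ne: "frontier U \<noteq> {}"
  shows "\<exists>\<beta>\<in>frontier U. rk \<beta> = CARD('p)"
proof -
  have le: "rk \<beta> \<le> CARD('p)" for \<beta> unfolding rk_def by (rule dim_subset_UNIV_cart)
  define R where "R = rk ` frontier U"
  have "R \<subseteq> {..CARD('p)}" using le unfolding R_def by auto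
  then have fR: "finite R" using finite_subset by blast
  have neR: "R \<noteq> {}" using ne unfolding R_def by simp
  obtain \<beta> where b: "\<beta> \<in> frontier U" "rk \<beta> = Max R" using Max_in[OF fR neR] unfolding R_def by auto
  show ?thesis
  proof (rule ccontr)
    assume "\<not> ?thesis"
    then have lt: "rk \<beta> < CARD('p)" using le[of \<beta>] b by fastforce
    have F: "fp n h x y U \<beta>" by (rule fp.intro[OF geo_axioms]) (unfold_locales, rule b(1))
    obtain \<gamma> where g: "\<gamma> \<in> frontier U" "rk \<gamma> > rk \<beta>" using fp.improve[OF F lt] by blast
    have "rk \<gamma> \<in> R" unfolding R_def using g by simp
    then have "rk \<gamma> \<le> Max R" using fR by simp
    then show False using g b by simp
  qed
qed

end

theorem mainTheorem3:
  fixes n h :: nat and x :: "nat \<Rightarrow> real^'p" and y :: "nat \<Rightarrow> real"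
  assumes np: "n > CARD('p)"
    and hp: "CARD('p) \<le> h" and hn: "h < n"
    and A1: "\<forall>i<n. x i \<noteq> 0 \<and> (\<forall>j<n. i \<noteq> j \<longrightarrow> x i \<noteq> x j \<and> x i \<noteq> - x j)"
    and A2: "\<forall>\<beta>. sorted_sq n x y h \<beta> > 0"
    and A3: "\<forall>s :: nat \<Rightarrow> real. (\<forall>k<n-1. s k \<in> {1, -1}) \<longrightarrow>
               dim {x k + s k *\<^sub>R x (k+1) | k. k < n - 1} = CARD('p)"
    and U: "U \<in> components (Uset n h x y)"
    and bd: "frontier U \<noteq> {}"
  shows "\<exists>\<beta> idx s. \<beta> \<in> frontier U
     \<and> (\<forall>k\<le>CARD('p). idx k < n) \<and> inj_on idx {0..CARD('p)}
     \<and> (\<forall>k<CARD('p). s k \<in> {1, -1 :: real})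
     \<and> (\<forall>c :: nat \<Rightarrow> real. (\<Sum>k<CARD('p). c k *\<^sub>R (x (idx k) + s k *\<^sub>R x (idx (k+1)))) = 0
            \<longrightarrow> (\<forall>k<CARD('p). c k = 0))
     \<and> (\<forall>\<gamma>. (\<forall>k<CARD('p). (x (idx k) + s k *\<^sub>R x (idx (k+1))) \<bullet> \<gamma> = y (idx k) + s k * y (idx (k+1)))
            \<longleftrightarrow> \<gamma> = \<beta>)
     \<and> (resid x y (idx 0) \<beta>)\<^sup>2 = sorted_sq n x y h \<beta>
     \<and> sorted_sq n x y h \<beta> = sorted_sq n x y (h+1) \<beta>"
proof -
  have h1: "1 \<le> h" using hp zero_less_card_finite[where 'a='p] by linarith
  have A3': "dim {x k + x (k+1) | k. k < n-1} = CARD('p)"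
    using A3[rule_format, of "\<lambda>_. 1"] by simp
  have G: "geo n h x y U" by (unfold_locales) (use h1 hn A2 A3' U in auto)
  obtain \<beta> where b: "\<beta> \<in> frontier U" "geo.rk n h x y \<beta> = CARD('p)"
    using geo.exists_full[OF G bd] by blast
  have F: "fp n h x y U \<beta>" by (rule fp.intro[OF G]) (unfold_locales, rule b(1))
  show ?thesis using fp.extract_sol[OF F b(2)] b(1) by blast
qed


end
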